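(* Consider the equation, for an unknown formal power series $U(T,m,\epsilon)$ in $T$, $$Q(im)U(qT,m,\epsilon)=T^{d_{D_1}}R_{D_1}(im)U(q^{\frac{d_{D_1}}{k_1}+1}T,m,\epsilon)+T^{d_{D_2}}R_{D_2}(im)U(q^{\frac{d_{D_2}}{k_2}+1}T,m,\epsilon)$$ $$+\sum_{\ell=1}^{D-1}\epsilon^{\Delta_\ell-d_\ell}T^{d_\ell}\,\sigma_{q,T}^{\delta_\ell}\Big(\frac{1}{(2\pi)^{1/2}}\int_{-\infty}^{+\infty}C_\ell(T,m-m_1,\epsilon)R_\ell(im_1)U(T,m_1,\epsilon)\,dm_1\Big)+\hat F(qT,m,\epsilon).$$ There exists a unique formal power series $\hat U(T,m,\epsilon)=\sum_{n\ge0}U_n(m,\epsilon)T^n$ solving this equation, and its coefficients $U_n(m,\epsilon)$ belong to $E_{(\beta,\mu)}$ (as functions of $m$) and depend holomorphically on $\epsilon\in D(0,\epsilon_0)$.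
   Context: Fix a real $q>1$, integers $1\le k_1<k_2$, and $\kappa$ with $1/\kappa=1/k_1-1/k_2$. Fix integers $D,D_1,D_2\ge3$, positive integers $d_{D_1},d_{D_2}$ and, for $1\le\ell\le D-1$, integers $d_\ell\ge1,\delta_\ell\ge1,\Delta_\ell\ge0$ with $\delta_1=1$, $\delta_\ell<\delta_{\ell+1}$ ($1\le \ell\le D-2$), and for all $1\le\ell\le D-1$: $\Delta_\ell\ge d_\ell$, $d_\ell/k_2+1\ge\delta_\ell$, $(d_{D_1}-1)/\kappa-d_\ell/k_2\ge\delta_\ell-1$, $(d_{D_2}-1)/k_2\ge\delta_\ell-1$; moreover $k_1d_{D_2}>k_2d_{D_1}$. Let $Q,R_{D_1},R_{D_2},R_1,\dots,R_{D-1}\in\mathbb{C}[X]$ with $\deg R_{D_1}=\deg R_{D_2}$, $\deg Q\ge\deg R_{D_j}\ge\deg R_\ell$, $Q(im)\neq0$ and $R_{D_j}(im)\ne0$ for all $m\in\mathbb{R}$, $j=1,2$. Fix $\beta>0$ and $\mu>\deg(R_{D_j})+1$. $E_{(\beta,\mu)}$ is the Banach space of continuous $h:\mathbb{R}\to\mathbb{C}$ with $\|h\|_{(\beta,\mu)}=\sup_m(1+|m|)^\mu e^{\beta|m|}|h(m)|<\infty$. For $\gamma\in\mathbb{R}$, $\sigma_{q,T}^{\gamma}$ is the operator $g(T)\mapsto g(q^\gamma T)$. Let $\epsilon_0>0$. For $n\ge0$, $F_n(m,\epsilon)$ belongs to $E_{(\beta,\mu)}$ in $m$ and depends holomorphically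 on $\epsilon\in D(0,\epsilon_0)$, and there are $C_F,T_0>0$ with $\|F_n\|_{(\beta,\mu)}\le C_F T_0^{-n}(q^{1/k_1})^{n(n-1)/2}$ for all $n\ge0$; $\hat F(T,m,\epsilon)=\sum_{n\ge0}F_n(m,\epsilon)T^n$. For $1\le\ell\le D-1$, $C_\ell(T,m,\epsilon)=\sum_{j=0}^{p_1}C_{\ell,j}(m,\epsilon)T^j$ with $C_{\ell,j}\in E_{(\beta,\mu)}$ in $m$, holomorphic in $\epsilon\in D(0,\epsilon_0)$. *)

theory Defs
  imports "HOL-Analysis.Analysis" "HOL-Computational_Algebra.Polynomial"
begin

definition E_space :: "real \<Rightarrow> real \<Rightarrow> (real \<Rightarrow> complex) set" where
  "E_space \<beta> \<mu> = {h. continuous_on UNIV h \<and>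
     bdd_above (range (\<lambda>m. (1 + \<bar>m\<bar>) powr \<mu> * exp (\<beta> * \<bar>m\<bar>) * cmod (h m)))}"

definition normE :: "real \<Rightarrow> real \<Rightarrow> (real \<Rightarrow> complex) \<Rightarrow> real" where
  "normE \<beta> \<mu> h = (SUP m. (1 + \<bar>m\<bar>) powr \<mu> * exp (\<beta> * \<bar>m\<bar>) * cmod (h m))"

definition holo_E :: "real \<Rightarrow> real \<Rightarrow> complex set \<Rightarrow> (complex \<Rightarrow> real \<Rightarrow> complex) \<Rightarrow> bool" where
  "holo_E \<beta> \<mu> S f \<longleftrightarrow>
     (\<forall>\<epsilon>\<in>S. f \<epsilon> \<in> E_space \<beta> \<mu>) \<and>
     (\<forall>\<epsilon>\<in>S. \<exists>g\<in>E_space \<beta> \<mu>.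
        ((\<lambda>h. normE \<beta> \<mu> (\<lambda>m. (f (\<epsilon> + h) m - f \<epsilon> m) / h - g m)) \<longlongrightarrow> 0) (at 0))"

text \<open>Formal power series in T whose coefficients are functions of m (epsilon fixed):
  A n m is the coefficient of T^n.\<close>

type_synonym fser = "nat \<Rightarrow> real \<Rightarrow> complex"

definition fs_shift :: "nat \<Rightarrow> fser \<Rightarrow> fser" where
  "fs_shift d A n m = (if d \<le> n then A (n - d) m else 0)"

text \<open>Dilation A(T) |-> A(c T); in particular sigma_{q,T}^gamma is fs_dil (q powr gamma).\<close>
definition fs_dil :: "real \<Rightarrow> fser \<Rightarrow> fser" where
  "fs_dil c A n m = complex_of_real (c ^ n) * A n m"

definition fs_polymul :: "complex poly \<Rightarrow> fser \<Rightarrow> fser" where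
  "fs_polymul P A n m = poly P (\<i> * complex_of_real m) * A n m"

text \<open>(2 pi)^(-1/2) * integral over R of C(T, m - m1) R(i m1) A(T, m1) dm1,
  computed coefficientwise in T (Cauchy product in T).\<close>
definition fs_conv :: "fser \<Rightarrow> complex poly \<Rightarrow> fser \<Rightarrow> fser" where
  "fs_conv C R A n m = complex_of_real (1 / sqrt (2 * pi)) *
     integral UNIV (\<lambda>m1. \<Sum>j\<le>n. C j (m - m1) * poly R (\<i> * complex_of_real m1) * A (n - j) m1)"

text \<open>The equation (coefficientwise in T), for all epsilon in D(0,eps0).
  C l j m eps is C_{l,j}(m,eps); the polynomial C_l(T) has degree \<le> p1 in T.\<close>

definition solves_eq ::
  "real \<Rightarrow> nat \<Rightarrow> nat \<Rightarrow> nat \<Rightarrow> nat \<Rightarrow> nat \<Rightarrow> complex poly \<Rightarrow> complex poly \<Rightarrow> complex poly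
   \<Rightarrow> (nat \<Rightarrow> complex poly) \<Rightarrow> (nat \<Rightarrow> nat) \<Rightarrow> (nat \<Rightarrow> nat) \<Rightarrow> (nat \<Rightarrow> nat)
   \<Rightarrow> (nat \<Rightarrow> nat \<Rightarrow> real \<Rightarrow> complex \<Rightarrow> complex) \<Rightarrow> nat
   \<Rightarrow> (nat \<Rightarrow> real \<Rightarrow> complex \<Rightarrow> complex) \<Rightarrow> real
   \<Rightarrow> (nat \<Rightarrow> real \<Rightarrow> complex \<Rightarrow> complex) \<Rightarrow> bool" where
  "solves_eq q k1 k2 D dD1 dD2 Q RD1 RD2 R d \<delta> \<Delta> C p1 F \<epsilon>0 U \<longleftrightarrow>
    (\<forall>\<epsilon>\<in>ball 0 \<epsilon>0. \<forall>n m.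
      fs_polymul Q (fs_dil q (\<lambda>n m. U n m \<epsilon>)) n m =
        fs_shift dD1 (fs_polymul RD1 (fs_dil (q powr (real dD1 / real k1 + 1)) (\<lambda>n m. U n m \<epsilon>))) n m
      + fs_shift dD2 (fs_polymul RD2 (fs_dil (q powr (real dD2 / real k2 + 1)) (\<lambda>n m. U n m \<epsilon>))) n m
      + (\<Sum>l\<in>{1..D-1}. \<epsilon> ^ (\<Delta> l - d l) *
           fs_shift (d l) (fs_dil (q powr real (\<delta> l))
             (fs_conv (\<lambda>j m. if j \<le> p1 then C l j m \<epsilon> else 0) (R l) (\<lambda>n m. U n m \<epsilon>))) n m)
      + fs_dil q (\<lambda>n m. F n m \<epsilon>) n m)"

end

theory Submission
  imports Defs
begin


definition wt :: "real \<Rightarrow> real \<Rightarrow> real \<Rightarrow> real" where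
  "wt \<beta> \<mu> m = (1 + \<bar>m\<bar>) powr \<mu> * exp (\<beta> * \<bar>m\<bar>)"

lemma wt_pos: "wt \<beta> \<mu> m > 0"
  unfolding wt_def by (simp add: add_pos_nonneg)

lemma wt_ge1: "\<beta> \<ge> 0 \<Longrightarrow> \<mu> \<ge> 0 \<Longrightarrow> wt \<beta> \<mu> m \<ge> 1"
proof -
  assume a: "\<beta> \<ge> 0" "\<mu> \<ge> 0"
  have "1 \<le> (1 + \<bar>m\<bar>) powr \<mu>" using a by (intro ge_one_powr_ge_zero) auto
  moreover have "1 \<le> exp (\<beta> * \<bar>m\<bar>)" using a by simp
  ultimately show ?thesis unfolding wt_def using mult_mono[of 1 "(1 + \<bar>m\<bar>) powr \<mu>" 1 "exp (\<beta> * \<bar>m\<bar>)"] by simp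
qed

lemma E_iff: "h \<in> E_space \<beta> \<mu> \<longleftrightarrow> continuous_on UNIV h \<and> (\<exists>B. \<forall>m. wt \<beta> \<mu> m * cmod (h m) \<le> B)"
  unfolding E_space_def wt_def bdd_above_def by auto

lemma E_intro: "continuous_on UNIV h \<Longrightarrow> (\<And>m. wt \<beta> \<mu> m * cmod (h m) \<le> B) \<Longrightarrow> h \<in> E_space \<beta> \<mu>"
  unfolding E_iff by blast

lemma E_cont: "h \<in> E_space \<beta> \<mu> \<Longrightarrow> continuous_on UNIV h"
  unfolding E_iff by blast

lemma normE_ub: "h \<in> E_space \<beta> \<mu> \<Longrightarrow> wt \<beta> \<mu> m * cmod (h m) \<le> normE \<beta> \<mu> h"
  unfolding normE_def E_space_def wt_def by (auto intro!: cSUP_upper)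

lemma normE_le: "(\<And>m. wt \<beta> \<mu> m * cmod (h m) \<le> B) \<Longrightarrow> normE \<beta> \<mu> h \<le> B"
  unfolding normE_def wt_def by (auto intro!: cSUP_least)

lemma normE_nonneg: "h \<in> E_space \<beta> \<mu> \<Longrightarrow> 0 \<le> normE \<beta> \<mu> h"
proof -
  assume h: "h \<in> E_space \<beta> \<mu>"
  have "0 \<le> wt \<beta> \<mu> 0 * cmod (h 0)" using wt_pos[of \<beta> \<mu> 0] by simp
  then show ?thesis using normE_ub[OF h, of 0] by linarith
qed

lemma normE_pt: "h \<in> E_space \<beta> \<mu> \<Longrightarrow> cmod (h m) \<le> normE \<beta> \<mu> h / wt \<beta> \<mu> m"
  using normE_ub[of h \<beta> \<mu> m] wt_pos[of \<beta> \<mu> m] by (simp add: field_simps)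

lemma normE_zero: "normE \<beta> \<mu> (\<lambda>m. 0) = 0"
  unfolding normE_def by simp

lemma E_zero: "(\<lambda>m. 0) \<in> E_space \<beta> \<mu>"
  by (rule E_intro[where B=0]) auto

lemma E_add: assumes "a \<in> E_space \<beta> \<mu>" "b \<in> E_space \<beta> \<mu>"
  shows "(\<lambda>m. a m + b m) \<in> E_space \<beta> \<mu>"
    and "normE \<beta> \<mu> (\<lambda>m. a m + b m) \<le> normE \<beta> \<mu> a + normE \<beta> \<mu> b"
proof -
  have *: "wt \<beta> \<mu> m * cmod (a m + b m) \<le> normE \<beta> \<mu> a + normE \<beta> \<mu> b" for m
  proof -
    have "wt \<beta> \<mu> m * cmod (a m + b m) \<le> wt \<beta> \<mu> m * cmod (a m) + wt \<beta> \<mu> m * cmod (b m)"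
      using mult_left_mono[OF norm_triangle_ineq[of "a m" "b m"], of "wt \<beta> \<mu> m"] wt_pos[of \<beta> \<mu> m]
      by (simp add: distrib_left)
    then show ?thesis using normE_ub[OF assms(1), of m] normE_ub[OF assms(2), of m] by linarith
  qed
  show "(\<lambda>m. a m + b m) \<in> E_space \<beta> \<mu>"
    by (rule E_intro[OF _ *]) (rule continuous_on_add[OF E_cont[OF assms(1)] E_cont[OF assms(2)]])
  show "normE \<beta> \<mu> (\<lambda>m. a m + b m) \<le> normE \<beta> \<mu> a + normE \<beta> \<mu> b"
    by (rule normE_le[OF *])
qed

lemma E_mult: assumes "a \<in> E_space \<beta> \<mu>" "continuous_on UNIV \<phi>" "\<And>m. cmod (\<phi> m) \<le> K"
  shows "(\<lambda>m. \<phi> m * a m) \<in> E_space \<beta> \<mu>"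
    and "normE \<beta> \<mu> (\<lambda>m. \<phi> m * a m) \<le> K * normE \<beta> \<mu> a"
proof -
  have *: "wt \<beta> \<mu> m * cmod (\<phi> m * a m) \<le> K * normE \<beta> \<mu> a" for m
  proof -
    have "wt \<beta> \<mu> m * cmod (\<phi> m * a m) = cmod (\<phi> m) * (wt \<beta> \<mu> m * cmod (a m))"
      by (simp add: norm_mult)
    also have "\<dots> \<le> K * normE \<beta> \<mu> a"
      by (rule mult_mono[OF assms(3) normE_ub[OF assms(1)]]) (use order_trans[OF norm_ge_zero assms(3)] wt_pos[of \<beta> \<mu> m] in \<open>simp_all\<close>)
    finally show ?thesis .
  qed
  show "(\<lambda>m. \<phi> m * a m) \<in> E_space \<beta> \<mu>"
    by (rule E_intro[OF _ *]) (rule continuous_on_mult[OF assms(2) E_cont[OF assms(1)]])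
  show "normE \<beta> \<mu> (\<lambda>m. \<phi> m * a m) \<le> K * normE \<beta> \<mu> a"
    by (rule normE_le[OF *])
qed

lemma E_scale: assumes "a \<in> E_space \<beta> \<mu>"
  shows "(\<lambda>m. c * a m) \<in> E_space \<beta> \<mu>"
    and "normE \<beta> \<mu> (\<lambda>m. c * a m) \<le> cmod c * normE \<beta> \<mu> a"
  using E_mult[OF assms, of "\<lambda>_. c" "cmod c"] by auto

lemma E_diff: assumes "a \<in> E_space \<beta> \<mu>" "b \<in> E_space \<beta> \<mu>"
  shows "(\<lambda>m. a m - b m) \<in> E_space \<beta> \<mu>"
proof -
  have "(\<lambda>m. a m + (-1) * b m) \<in> E_space \<beta> \<mu>"
    by (intro E_add E_scale assms)
  then show ?thesis by simp
qed

lemma E_sum: assumes "finite I" "\<And>i. i \<in> I \<Longrightarrow> a i \<in> E_space \<beta> \<mu>"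
  shows "(\<lambda>m. \<Sum>i\<in>I. a i m) \<in> E_space \<beta> \<mu>"
  using assms proof (induction I rule: finite_induct)
  case empty
  then show ?case by (simp add: E_zero)
next
  case (insert x F)
  then show ?case by (simp add: E_add(1))
qed


lemma ev_at0:
  assumes "open S" "\<epsilon> \<in> S"
  shows "\<forall>\<^sub>F h in at (0::complex). h \<noteq> 0 \<and> \<epsilon> + h \<in> S"
proof -
  have "((\<lambda>h. \<epsilon> + h) \<longlongrightarrow> \<epsilon> + 0) (at (0::complex))"
    by (intro tendsto_intros)
  then have "\<forall>\<^sub>F h in at (0::complex). \<epsilon> + h \<in> S"
    using assms unfolding tendsto_def by simp
  moreover have "\<forall>\<^sub>F h in at (0::complex). h \<noteq> 0"
    by (simp add: eventually_at_filter)
  ultimately show ?thesis by (simp add: eventually_conj_iff)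
qed

lemma holo_ED:
  assumes "holo_E \<beta> \<mu> S f" "\<epsilon> \<in> S"
  shows "f \<epsilon> \<in> E_space \<beta> \<mu>"
    and "\<exists>g\<in>E_space \<beta> \<mu>. ((\<lambda>h. normE \<beta> \<mu> (\<lambda>m. (f (\<epsilon> + h) m - f \<epsilon> m) / h - g m)) \<longlongrightarrow> 0) (at 0)"
  using assms unfolding holo_E_def by auto

lemma holo_E_cont:
  assumes "holo_E \<beta> \<mu> S f" "open S" "\<epsilon> \<in> S"
  shows "((\<lambda>h. normE \<beta> \<mu> (\<lambda>m. f (\<epsilon> + h) m - f \<epsilon> m)) \<longlongrightarrow> 0) (at 0)"
proof -
  obtain g where g: "g \<in> E_space \<beta> \<mu>"
    and lim: "((\<lambda>h. normE \<beta> \<mu> (\<lambda>m. (f (\<epsilon> + h) m - f \<epsilon> m) / h - g m)) \<longlongrightarrow> 0) (at 0)"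
    using holo_ED(2)[OF assms(1,3)] by blast
  have f0: "f \<epsilon> \<in> E_space \<beta> \<mu>" using holo_ED(1)[OF assms(1,3)] .
  have ev: "\<forall>\<^sub>F h in at (0::complex). norm (normE \<beta> \<mu> (\<lambda>m. f (\<epsilon> + h) m - f \<epsilon> m))
     \<le> cmod h * (normE \<beta> \<mu> (\<lambda>m. (f (\<epsilon> + h) m - f \<epsilon> m) / h - g m) + normE \<beta> \<mu> g)"
    using ev_at0[OF assms(2,3)]
  proof eventually_elim
    case (elim h)
    then have f1: "f (\<epsilon> + h) \<in> E_space \<beta> \<mu>" using holo_ED(1)[OF assms(1)] by blast
    define D where "D = (\<lambda>m. (f (\<epsilon> + h) m - f \<epsilon> m) / h - g m)"
    have dE: "(\<lambda>m. f (\<epsilon> + h) m - f \<epsilon> m) \<in> E_space \<beta> \<mu>" by (rule E_diff[OF f1 f0])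
    have DE: "D \<in> E_space \<beta> \<mu>" unfolding D_def
      using E_diff[OF E_scale(1)[OF dE, of "1/h"] g] by simp
    have eq: "(\<lambda>m. f (\<epsilon> + h) m - f \<epsilon> m) = (\<lambda>m. h * (D m + g m))"
      using elim by (auto simp: D_def field_simps)
    have "normE \<beta> \<mu> (\<lambda>m. f (\<epsilon> + h) m - f \<epsilon> m) \<le> cmod h * normE \<beta> \<mu> (\<lambda>m. D m + g m)"
      unfolding eq by (rule E_scale(2)[OF E_add(1)[OF DE g]])
    also have "\<dots> \<le> cmod h * (normE \<beta> \<mu> D + normE \<beta> \<mu> g)"
      by (rule mult_left_mono[OF E_add(2)[OF DE g]]) simp
    finally show ?case using normE_nonneg[OF dE] by (simp add: D_def)
  qed
  have "((\<lambda>h. cmod h * (normE \<beta> \<mu> (\<lambda>m. (f (\<epsilon> + h) m - f \<epsilon> m) / h - g m) + normE \<beta> \<mu> g))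
        \<longlongrightarrow> cmod 0 * (0 + normE \<beta> \<mu> g)) (at 0)"
    by (intro tendsto_intros lim)
  then show ?thesis using Lim_null_comparison[OF ev] by simp
qed

lemma hq_E:
  assumes "a \<in> E_space \<beta> \<mu>" "b \<in> E_space \<beta> \<mu>" "g \<in> E_space \<beta> \<mu>"
  shows "(\<lambda>m. (b m - a m) / h - g m) \<in> E_space \<beta> \<mu>"
  using E_diff[OF E_scale(1)[OF E_diff[OF assms(2,1)], of "1/h"] assms(3)] by simp

lemma holo_E_intro:
  assumes "\<And>\<epsilon>. \<epsilon> \<in> S \<Longrightarrow> f \<epsilon> \<in> E_space \<beta> \<mu>"
    and "\<And>\<epsilon>. \<epsilon> \<in> S \<Longrightarrow> \<exists>g\<in>E_space \<beta> \<mu>. ((\<lambda>h. normE \<beta> \<mu> (\<lambda>m. (f (\<epsilon> + h) m - f \<epsilon> m) / h - g m)) \<longlongrightarrow> 0) (at 0)"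
  shows "holo_E \<beta> \<mu> S f"
  using assms unfolding holo_E_def by auto

lemma holo_E_cong:
  assumes "holo_E \<beta> \<mu> S f" "open S" "\<And>\<epsilon> m. \<epsilon> \<in> S \<Longrightarrow> f \<epsilon> m = g \<epsilon> m"
  shows "holo_E \<beta> \<mu> S g"
proof (rule holo_E_intro)
  fix \<epsilon> assume e: "\<epsilon> \<in> S"
  show "g \<epsilon> \<in> E_space \<beta> \<mu>"
  proof -
    have "g \<epsilon> = f \<epsilon>" using assms(3)[OF e] by (intro ext) simp
    then show ?thesis using holo_ED(1)[OF assms(1) e] by simp
  qed
  obtain d where d: "d \<in> E_space \<beta> \<mu>"
    and lim: "((\<lambda>h. normE \<beta> \<mu> (\<lambda>m. (f (\<epsilon> + h) m - f \<epsilon> m) / h - d m)) \<longlongrightarrow> 0) (at 0)"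
    using holo_ED(2)[OF assms(1) e] by blast
  have ev: "\<forall>\<^sub>F h in at (0::complex). normE \<beta> \<mu> (\<lambda>m. (f (\<epsilon> + h) m - f \<epsilon> m) / h - d m)
       = normE \<beta> \<mu> (\<lambda>m. (g (\<epsilon> + h) m - g \<epsilon> m) / h - d m)"
    using ev_at0[OF assms(2) e] by eventually_elim (simp add: assms(3) e)
  have "((\<lambda>h. normE \<beta> \<mu> (\<lambda>m. (g (\<epsilon> + h) m - g \<epsilon> m) / h - d m)) \<longlongrightarrow> 0) (at 0)"
    by (rule tendsto_cong[THEN iffD1, OF ev lim])
  with d show "\<exists>g'\<in>E_space \<beta> \<mu>. ((\<lambda>h. normE \<beta> \<mu> (\<lambda>m. (g (\<epsilon> + h) m - g \<epsilon> m) / h - g' m)) \<longlongrightarrow> 0) (at 0)"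
    by blast
qed

lemma holo_E_zero: "holo_E \<beta> \<mu> S (\<lambda>\<epsilon> m. 0)"
proof (rule holo_E_intro)
  show "(\<lambda>m. 0) \<in> E_space \<beta> \<mu>" for \<epsilon> by (rule E_zero)
  show "\<exists>g\<in>E_space \<beta> \<mu>. ((\<lambda>h. normE \<beta> \<mu> (\<lambda>m. (0 - 0) / h - g m)) \<longlongrightarrow> 0) (at 0)" for \<epsilon>
    by (rule bexI[OF _ E_zero]) (simp add: normE_zero)
qed

lemma holo_E_add:
  assumes f: "holo_E \<beta> \<mu> S f" and g: "holo_E \<beta> \<mu> S g" and S: "open S"
  shows "holo_E \<beta> \<mu> S (\<lambda>\<epsilon> m. f \<epsilon> m + g \<epsilon> m)"
proof (rule holo_E_intro)
  fix \<epsilon> assume e: "\<epsilon> \<in> S"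
  show "(\<lambda>m. f \<epsilon> m + g \<epsilon> m) \<in> E_space \<beta> \<mu>"
    by (rule E_add(1)[OF holo_ED(1)[OF f e] holo_ED(1)[OF g e]])
  obtain df where df: "df \<in> E_space \<beta> \<mu>"
    and limf: "((\<lambda>h. normE \<beta> \<mu> (\<lambda>m. (f (\<epsilon> + h) m - f \<epsilon> m) / h - df m)) \<longlongrightarrow> 0) (at 0)"
    using holo_ED(2)[OF f e] by blast
  obtain dg where dg: "dg \<in> E_space \<beta> \<mu>"
    and limg: "((\<lambda>h. normE \<beta> \<mu> (\<lambda>m. (g (\<epsilon> + h) m - g \<epsilon> m) / h - dg m)) \<longlongrightarrow> 0) (at 0)"
    using holo_ED(2)[OF g e] by blast
  have ev: "\<forall>\<^sub>F h in at (0::complex).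
     norm (normE \<beta> \<mu> (\<lambda>m. ((f (\<epsilon> + h) m + g (\<epsilon> + h) m) - (f \<epsilon> m + g \<epsilon> m)) / h - (df m + dg m)))
     \<le> normE \<beta> \<mu> (\<lambda>m. (f (\<epsilon> + h) m - f \<epsilon> m) / h - df m) + normE \<beta> \<mu> (\<lambda>m. (g (\<epsilon> + h) m - g \<epsilon> m) / h - dg m)"
    using ev_at0[OF S e]
  proof eventually_elim
    case (elim h)
    have A: "(\<lambda>m. (f (\<epsilon> + h) m - f \<epsilon> m) / h - df m) \<in> E_space \<beta> \<mu>"
      by (rule hq_E[OF holo_ED(1)[OF f e] holo_ED(1)[OF f] df]) (use elim in simp)
    have B: "(\<lambda>m. (g (\<epsilon> + h) m - g \<epsilon> m) / h - dg m) \<in> E_space \<beta> \<mu>"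
      by (rule hq_E[OF holo_ED(1)[OF g e] holo_ED(1)[OF g] dg]) (use elim in simp)
    have eq: "(\<lambda>m. ((f (\<epsilon> + h) m + g (\<epsilon> + h) m) - (f \<epsilon> m + g \<epsilon> m)) / h - (df m + dg m))
      = (\<lambda>m. ((f (\<epsilon> + h) m - f \<epsilon> m) / h - df m) + ((g (\<epsilon> + h) m - g \<epsilon> m) / h - dg m))"
      using elim by (auto simp: field_simps)
    show ?case unfolding eq using E_add[OF A B] normE_nonneg[OF E_add(1)[OF A B]] by simp
  qed
  have lim: "((\<lambda>h. normE \<beta> \<mu> (\<lambda>m. (f (\<epsilon> + h) m - f \<epsilon> m) / h - df m) + normE \<beta> \<mu> (\<lambda>m. (g (\<epsilon> + h) m - g \<epsilon> m) / h - dg m)) \<longlongrightarrow> 0) (at 0)"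
    using tendsto_add[OF limf limg] by simp
  show "\<exists>d\<in>E_space \<beta> \<mu>. ((\<lambda>h. normE \<beta> \<mu> (\<lambda>m. (f (\<epsilon> + h) m + g (\<epsilon> + h) m - (f \<epsilon> m + g \<epsilon> m)) / h - d m)) \<longlongrightarrow> 0) (at 0)"
  proof (rule bexI[where x="\<lambda>m. df m + dg m"])
    show "((\<lambda>h. normE \<beta> \<mu> (\<lambda>m. (f (\<epsilon> + h) m + g (\<epsilon> + h) m - (f \<epsilon> m + g \<epsilon> m)) / h - (df m + dg m))) \<longlongrightarrow> 0) (at 0)"
      by (rule Lim_null_comparison[OF ev lim])
  qed (rule E_add(1)[OF df dg])
qed

lemma holo_E_sum:
  assumes "finite I" "\<And>i. i \<in> I \<Longrightarrow> holo_E \<beta> \<mu> S (f i)" "open S"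
  shows "holo_E \<beta> \<mu> S (\<lambda>\<epsilon> m. \<Sum>i\<in>I. f i \<epsilon> m)"
  using assms proof (induction I rule: finite_induct)
  case empty
  then show ?case by (simp add: holo_E_zero)
next
  case (insert x F)
  then show ?case using holo_E_add[of \<beta> \<mu> S "f x" "\<lambda>\<epsilon> m. \<Sum>i\<in>F. f i \<epsilon> m"] by simp
qed

lemma holo_E_mult:
  assumes f: "holo_E \<beta> \<mu> S f" and S: "open S"
    and phi: "continuous_on UNIV \<phi>" "\<And>m. cmod (\<phi> m) \<le> K"
  shows "holo_E \<beta> \<mu> S (\<lambda>\<epsilon> m. \<phi> m * f \<epsilon> m)"
proof (rule holo_E_intro)
  fix \<epsilon> assume e: "\<epsilon> \<in> S"
  show "(\<lambda>m. \<phi> m * f \<epsilon> m) \<in> E_space \<beta> \<mu>"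
    by (rule E_mult(1)[OF holo_ED(1)[OF f e] phi])
  obtain df where df: "df \<in> E_space \<beta> \<mu>"
    and limf: "((\<lambda>h. normE \<beta> \<mu> (\<lambda>m. (f (\<epsilon> + h) m - f \<epsilon> m) / h - df m)) \<longlongrightarrow> 0) (at 0)"
    using holo_ED(2)[OF f e] by blast
  have ev: "\<forall>\<^sub>F h in at (0::complex).
     norm (normE \<beta> \<mu> (\<lambda>m. (\<phi> m * f (\<epsilon> + h) m - \<phi> m * f \<epsilon> m) / h - \<phi> m * df m))
     \<le> K * normE \<beta> \<mu> (\<lambda>m. (f (\<epsilon> + h) m - f \<epsilon> m) / h - df m)"
    using ev_at0[OF S e]
  proof eventually_elim
    case (elim h)
    have A: "(\<lambda>m. (f (\<epsilon> + h) m - f \<epsilon> m) / h - df m) \<in> E_space \<beta> \<mu>"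
      by (rule hq_E[OF holo_ED(1)[OF f e] holo_ED(1)[OF f] df]) (use elim in simp)
    have eq: "(\<lambda>m. (\<phi> m * f (\<epsilon> + h) m - \<phi> m * f \<epsilon> m) / h - \<phi> m * df m)
      = (\<lambda>m. \<phi> m * ((f (\<epsilon> + h) m - f \<epsilon> m) / h - df m))"
      using elim by (auto simp: field_simps)
    show ?case unfolding eq using E_mult[OF A phi] normE_nonneg[OF E_mult(1)[OF A phi]] by simp
  qed
  have lim: "((\<lambda>h. K * normE \<beta> \<mu> (\<lambda>m. (f (\<epsilon> + h) m - f \<epsilon> m) / h - df m)) \<longlongrightarrow> 0) (at 0)"
    using tendsto_mult[OF tendsto_const limf, of K] by simp
  show "\<exists>d\<in>E_space \<beta> \<mu>. ((\<lambda>h. normE \<beta> \<mu> (\<lambda>m. (\<phi> m * f (\<epsilon> + h) m - \<phi> m * f \<epsilon> m) / h - d m)) \<longlongrightarrow> 0) (at 0)"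
  proof (rule bexI[where x="\<lambda>m. \<phi> m * df m"])
    show "((\<lambda>h. normE \<beta> \<mu> (\<lambda>m. (\<phi> m * f (\<epsilon> + h) m - \<phi> m * f \<epsilon> m) / h - \<phi> m * df m)) \<longlongrightarrow> 0) (at 0)"
      by (rule Lim_null_comparison[OF ev lim])
  qed (rule E_mult(1)[OF df phi])
qed

lemma holo_E_cmult:
  assumes f: "holo_E \<beta> \<mu> S f" and S: "open S"
  shows "holo_E \<beta> \<mu> S (\<lambda>\<epsilon> m. c * f \<epsilon> m)"
  using holo_E_mult[OF f S, of "\<lambda>_. c" "cmod c"] by simp


lemma E_add3: assumes "a \<in> E_space \<beta> \<mu>" "b \<in> E_space \<beta> \<mu>" "c \<in> E_space \<beta> \<mu>"
  shows "(\<lambda>m. a m + b m + c m) \<in> E_space \<beta> \<mu>"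
    and "normE \<beta> \<mu> (\<lambda>m. a m + b m + c m) \<le> normE \<beta> \<mu> a + normE \<beta> \<mu> b + normE \<beta> \<mu> c"
proof -
  show "(\<lambda>m. a m + b m + c m) \<in> E_space \<beta> \<mu>"
    using E_add(1)[OF E_add(1)[OF assms(1,2)] assms(3)] .
  have "normE \<beta> \<mu> (\<lambda>m. a m + b m + c m) \<le> normE \<beta> \<mu> (\<lambda>m. a m + b m) + normE \<beta> \<mu> c"
    using E_add(2)[OF E_add(1)[OF assms(1,2)] assms(3)] .
  then show "normE \<beta> \<mu> (\<lambda>m. a m + b m + c m) \<le> normE \<beta> \<mu> a + normE \<beta> \<mu> b + normE \<beta> \<mu> c"
    using E_add(2)[OF assms(1,2)] by linarith
qed

lemma normE_split1:
  assumes "a \<in> E_space \<beta> \<mu>" "b \<in> E_space \<beta> \<mu>"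
  shows "normE \<beta> \<mu> b \<le> normE \<beta> \<mu> a + normE \<beta> \<mu> (\<lambda>m. b m - a m)"
proof -
  have "b = (\<lambda>m. a m + (b m - a m))" by simp
  then have "normE \<beta> \<mu> b = normE \<beta> \<mu> (\<lambda>m. a m + (b m - a m))" by simp
  also have "\<dots> \<le> normE \<beta> \<mu> a + normE \<beta> \<mu> (\<lambda>m. b m - a m)"
    by (rule E_add(2)[OF assms(1) E_diff[OF assms(2,1)]])
  finally show ?thesis .
qed

lemma holo_E_scal:
  assumes f: "holo_E \<beta> \<mu> S f" and S: "open S"
    and p: "\<And>\<epsilon>. \<epsilon> \<in> S \<Longrightarrow> (p has_field_derivative p' \<epsilon>) (at \<epsilon>)"
  shows "holo_E \<beta> \<mu> S (\<lambda>\<epsilon> m. p \<epsilon> * f \<epsilon> m)"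
proof (rule holo_E_intro)
  fix \<epsilon> assume e: "\<epsilon> \<in> S"
  have f0: "f \<epsilon> \<in> E_space \<beta> \<mu>" by (rule holo_ED(1)[OF f e])
  show "(\<lambda>m. p \<epsilon> * f \<epsilon> m) \<in> E_space \<beta> \<mu>"
    by (rule E_scale(1)[OF f0])
  obtain df where df: "df \<in> E_space \<beta> \<mu>"
    and limf: "((\<lambda>h. normE \<beta> \<mu> (\<lambda>m. (f (\<epsilon> + h) m - f \<epsilon> m) / h - df m)) \<longlongrightarrow> 0) (at 0)"
    using holo_ED(2)[OF f e] by blast
  define dp where "dp = (\<lambda>h. (p (\<epsilon> + h) - p \<epsilon>) / h - p' \<epsilon>)"
  have "((\<lambda>h. (p (\<epsilon> + h) - p \<epsilon>) / h) \<longlongrightarrow> p' \<epsilon>) (at 0)"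
    using p[OF e] by (simp add: DERIV_def)
  then have "((\<lambda>h. cmod (dp h)) \<longlongrightarrow> cmod (p' \<epsilon> - p' \<epsilon>)) (at 0)"
    unfolding dp_def by (intro tendsto_intros)
  then have limp: "((\<lambda>h. cmod (dp h)) \<longlongrightarrow> 0) (at 0)" by simp
  have limd: "((\<lambda>h. normE \<beta> \<mu> (\<lambda>m. f (\<epsilon> + h) m - f \<epsilon> m)) \<longlongrightarrow> 0) (at 0)"
    by (rule holo_E_cont[OF f S e])
  define bnd where "bnd = (\<lambda>h. cmod (dp h) * (normE \<beta> \<mu> (f \<epsilon>) + normE \<beta> \<mu> (\<lambda>m. f (\<epsilon> + h) m - f \<epsilon> m))
     + cmod (p' \<epsilon>) * normE \<beta> \<mu> (\<lambda>m. f (\<epsilon> + h) m - f \<epsilon> m)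
     + cmod (p \<epsilon>) * normE \<beta> \<mu> (\<lambda>m. (f (\<epsilon> + h) m - f \<epsilon> m) / h - df m))"
  have ev: "\<forall>\<^sub>F h in at (0::complex).
     norm (normE \<beta> \<mu> (\<lambda>m. (p (\<epsilon> + h) * f (\<epsilon> + h) m - p \<epsilon> * f \<epsilon> m) / h - (p' \<epsilon> * f \<epsilon> m + p \<epsilon> * df m)))
     \<le> bnd h"
    using ev_at0[OF S e]
  proof eventually_elim
    case (elim h)
    have f1: "f (\<epsilon> + h) \<in> E_space \<beta> \<mu>" using holo_ED(1)[OF f] elim by simp
    have Df: "(\<lambda>m. (f (\<epsilon> + h) m - f \<epsilon> m) / h - df m) \<in> E_space \<beta> \<mu>"
      by (rule hq_E[OF f0 f1 df])
    have dE: "(\<lambda>m. f (\<epsilon> + h) m - f \<epsilon> m) \<in> E_space \<beta> \<mu>" by (rule E_diff[OF f1 f0])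
    have eq: "(\<lambda>m. (p (\<epsilon> + h) * f (\<epsilon> + h) m - p \<epsilon> * f \<epsilon> m) / h - (p' \<epsilon> * f \<epsilon> m + p \<epsilon> * df m))
      = (\<lambda>m. dp h * f (\<epsilon> + h) m + p' \<epsilon> * (f (\<epsilon> + h) m - f \<epsilon> m) + p \<epsilon> * ((f (\<epsilon> + h) m - f \<epsilon> m) / h - df m))"
      using elim by (auto simp: dp_def field_simps)
    have A: "(\<lambda>m. dp h * f (\<epsilon> + h) m) \<in> E_space \<beta> \<mu>" by (rule E_scale(1)[OF f1])
    have B: "(\<lambda>m. p' \<epsilon> * (f (\<epsilon> + h) m - f \<epsilon> m)) \<in> E_space \<beta> \<mu>" by (rule E_scale(1)[OF dE])
    have C: "(\<lambda>m. p \<epsilon> * ((f (\<epsilon> + h) m - f \<epsilon> m) / h - df m)) \<in> E_space \<beta> \<mu>" by (rule E_scale(1)[OF Df])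
    have n1: "normE \<beta> \<mu> (\<lambda>m. dp h * f (\<epsilon> + h) m) \<le> cmod (dp h) * (normE \<beta> \<mu> (f \<epsilon>) + normE \<beta> \<mu> (\<lambda>m. f (\<epsilon> + h) m - f \<epsilon> m))"
      using E_scale(2)[OF f1, of "dp h"] mult_left_mono[OF normE_split1[OF f0 f1], of "cmod (dp h)"] by simp
    have n2: "normE \<beta> \<mu> (\<lambda>m. p' \<epsilon> * (f (\<epsilon> + h) m - f \<epsilon> m)) \<le> cmod (p' \<epsilon>) * normE \<beta> \<mu> (\<lambda>m. f (\<epsilon> + h) m - f \<epsilon> m)"
      by (rule E_scale(2)[OF dE])
    have n3: "normE \<beta> \<mu> (\<lambda>m. p \<epsilon> * ((f (\<epsilon> + h) m - f \<epsilon> m) / h - df m)) \<le> cmod (p \<epsilon>) * normE \<beta> \<mu> (\<lambda>m. (f (\<epsilon> + h) m - f \<epsilon> m) / h - df m)"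
      by (rule E_scale(2)[OF Df])
    have "normE \<beta> \<mu> (\<lambda>m. dp h * f (\<epsilon> + h) m + p' \<epsilon> * (f (\<epsilon> + h) m - f \<epsilon> m) + p \<epsilon> * ((f (\<epsilon> + h) m - f \<epsilon> m) / h - df m)) \<le> bnd h"
      using E_add3(2)[OF A B C] n1 n2 n3 unfolding bnd_def by linarith
    moreover have "0 \<le> normE \<beta> \<mu> (\<lambda>m. dp h * f (\<epsilon> + h) m + p' \<epsilon> * (f (\<epsilon> + h) m - f \<epsilon> m) + p \<epsilon> * ((f (\<epsilon> + h) m - f \<epsilon> m) / h - df m))"
      by (rule normE_nonneg[OF E_add3(1)[OF A B C]])
    ultimately show ?case unfolding eq by simp
  qed
  have "(bnd \<longlongrightarrow> 0 * (normE \<beta> \<mu> (f \<epsilon>) + 0) + cmod (p' \<epsilon>) * 0 + cmod (p \<epsilon>) * 0) (at 0)"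
    unfolding bnd_def by (intro tendsto_add tendsto_mult tendsto_const limp limd limf)
  then have lim: "(bnd \<longlongrightarrow> 0) (at 0)" by simp
  have G: "(\<lambda>m. p' \<epsilon> * f \<epsilon> m + p \<epsilon> * df m) \<in> E_space \<beta> \<mu>"
    by (rule E_add(1)[OF E_scale(1)[OF f0] E_scale(1)[OF df]])
  show "\<exists>d\<in>E_space \<beta> \<mu>. ((\<lambda>h. normE \<beta> \<mu> (\<lambda>m. (p (\<epsilon> + h) * f (\<epsilon> + h) m - p \<epsilon> * f \<epsilon> m) / h - d m)) \<longlongrightarrow> 0) (at 0)"
  proof (rule bexI[where x="\<lambda>m. p' \<epsilon> * f \<epsilon> m + p \<epsilon> * df m"])
    show "((\<lambda>h. normE \<beta> \<mu> (\<lambda>m. (p (\<epsilon> + h) * f (\<epsilon> + h) m - p \<epsilon> * f \<epsilon> m) / h - (p' \<epsilon> * f \<epsilon> m + p \<epsilon> * df m))) \<longlongrightarrow> 0) (at 0)"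
      by (rule Lim_null_comparison[OF ev lim])
  qed (rule G)
qed

locale bilinE =
  fixes \<beta> \<mu> :: real and K :: real and B :: "(real \<Rightarrow> complex) \<Rightarrow> (real \<Rightarrow> complex) \<Rightarrow> real \<Rightarrow> complex"
  assumes B_E: "\<And>a b. a \<in> E_space \<beta> \<mu> \<Longrightarrow> b \<in> E_space \<beta> \<mu> \<Longrightarrow> B a b \<in> E_space \<beta> \<mu>"
    and B_norm: "\<And>a b. a \<in> E_space \<beta> \<mu> \<Longrightarrow> b \<in> E_space \<beta> \<mu> \<Longrightarrow> normE \<beta> \<mu> (B a b) \<le> K * normE \<beta> \<mu> a * normE \<beta> \<mu> b"
    and B_lin1: "\<And>a1 a2 b x y. a1 \<in> E_space \<beta> \<mu> \<Longrightarrow> a2 \<in> E_space \<beta> \<mu> \<Longrightarrow> b \<in> E_space \<beta> \<mu> \<Longrightarrow>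
         B (\<lambda>m. x * a1 m + y * a2 m) b = (\<lambda>m. x * B a1 b m + y * B a2 b m)"
    and B_lin2: "\<And>a b1 b2 x y. a \<in> E_space \<beta> \<mu> \<Longrightarrow> b1 \<in> E_space \<beta> \<mu> \<Longrightarrow> b2 \<in> E_space \<beta> \<mu> \<Longrightarrow>
         B a (\<lambda>m. x * b1 m + y * b2 m) = (\<lambda>m. x * B a b1 m + y * B a b2 m)"
begin

lemma B_diff2:
  assumes "a \<in> E_space \<beta> \<mu>" "b1 \<in> E_space \<beta> \<mu>" "b2 \<in> E_space \<beta> \<mu>"
  shows "B a (\<lambda>m. b1 m - b2 m) = (\<lambda>m. B a b1 m - B a b2 m)"
  using B_lin2[OF assms, of 1 "-1"] by simp

lemma B_hq1:
  assumes "a0 \<in> E_space \<beta> \<mu>" "a1 \<in> E_space \<beta> \<mu>" "g \<in> E_space \<beta> \<mu>" "b \<in> E_space \<beta> \<mu>"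
  shows "B (\<lambda>m. (a1 m - a0 m) / h - g m) b = (\<lambda>m. (B a1 b m - B a0 b m) / h - B g b m)"
proof -
  have d: "(\<lambda>m. (1/h) * a1 m + (- 1/h) * a0 m) \<in> E_space \<beta> \<mu>"
    by (intro E_add(1) E_scale(1) assms)
  have eq0: "(\<lambda>m. (a1 m - a0 m) / h - g m) = (\<lambda>m. 1 * ((1/h) * a1 m + (- 1/h) * a0 m) + (-1) * g m)"
    by (rule ext) (simp add: diff_divide_distrib)
  have "B (\<lambda>m. (a1 m - a0 m) / h - g m) b = B (\<lambda>m. 1 * ((1/h) * a1 m + (- 1/h) * a0 m) + (-1) * g m) b"
    unfolding eq0 by (rule refl)
  also have "\<dots> = (\<lambda>m. 1 * B (\<lambda>m. (1/h) * a1 m + (- 1/h) * a0 m) b m + (-1) * B g b m)"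
    by (rule B_lin1[OF d assms(3,4)])
  also have "\<dots> = (\<lambda>m. 1 * ((1/h) * B a1 b m + (- 1/h) * B a0 b m) + (-1) * B g b m)"
    by (simp only: B_lin1[OF assms(2,1,4)])
  also have "\<dots> = (\<lambda>m. (B a1 b m - B a0 b m) / h - B g b m)"
    by (rule ext) (simp add: diff_divide_distrib)
  finally show ?thesis .
qed

lemma B_hq2:
  assumes "a0 \<in> E_space \<beta> \<mu>" "a1 \<in> E_space \<beta> \<mu>" "g \<in> E_space \<beta> \<mu>" "b \<in> E_space \<beta> \<mu>"
  shows "B b (\<lambda>m. (a1 m - a0 m) / h - g m) = (\<lambda>m. (B b a1 m - B b a0 m) / h - B b g m)"
proof -
  have d: "(\<lambda>m. (1/h) * a1 m + (- 1/h) * a0 m) \<in> E_space \<beta> \<mu>"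
    by (intro E_add(1) E_scale(1) assms)
  have eq0: "(\<lambda>m. (a1 m - a0 m) / h - g m) = (\<lambda>m. 1 * ((1/h) * a1 m + (- 1/h) * a0 m) + (-1) * g m)"
    by (rule ext) (simp add: diff_divide_distrib)
  have "B b (\<lambda>m. (a1 m - a0 m) / h - g m) = B b (\<lambda>m. 1 * ((1/h) * a1 m + (- 1/h) * a0 m) + (-1) * g m)"
    unfolding eq0 by (rule refl)
  also have "\<dots> = (\<lambda>m. 1 * B b (\<lambda>m. (1/h) * a1 m + (- 1/h) * a0 m) m + (-1) * B b g m)"
    by (rule B_lin2[OF assms(4) d assms(3)])
  also have "\<dots> = (\<lambda>m. 1 * ((1/h) * B b a1 m + (- 1/h) * B b a0 m) + (-1) * B b g m)"
    by (simp only: B_lin2[OF assms(4,2,1)])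
  also have "\<dots> = (\<lambda>m. (B b a1 m - B b a0 m) / h - B b g m)"
    by (rule ext) (simp add: diff_divide_distrib)
  finally show ?thesis .
qed

lemma B_norm': "a \<in> E_space \<beta> \<mu> \<Longrightarrow> b \<in> E_space \<beta> \<mu> \<Longrightarrow> normE \<beta> \<mu> b \<le> N \<Longrightarrow> K \<ge> 0 \<Longrightarrow>
   normE \<beta> \<mu> (B a b) \<le> K * normE \<beta> \<mu> a * N"
  using B_norm[of a b] mult_left_mono[of "normE \<beta> \<mu> b" N "K * normE \<beta> \<mu> a"] normE_nonneg[of a]
  by (simp add: mult.assoc)

lemma holo_E_bilin:
  assumes f: "holo_E \<beta> \<mu> S f" and g: "holo_E \<beta> \<mu> S g" and S: "open S" and K: "K \<ge> 0"
  shows "holo_E \<beta> \<mu> S (\<lambda>\<epsilon>. B (f \<epsilon>) (g \<epsilon>))"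
proof (rule holo_E_intro)
  fix \<epsilon> assume e: "\<epsilon> \<in> S"
  have f0: "f \<epsilon> \<in> E_space \<beta> \<mu>" by (rule holo_ED(1)[OF f e])
  have g0: "g \<epsilon> \<in> E_space \<beta> \<mu>" by (rule holo_ED(1)[OF g e])
  show "B (f \<epsilon>) (g \<epsilon>) \<in> E_space \<beta> \<mu>" by (rule B_E[OF f0 g0])
  obtain df where df: "df \<in> E_space \<beta> \<mu>"
    and limf: "((\<lambda>h. normE \<beta> \<mu> (\<lambda>m. (f (\<epsilon> + h) m - f \<epsilon> m) / h - df m)) \<longlongrightarrow> 0) (at 0)"
    using holo_ED(2)[OF f e] by blast
  obtain dg where dg: "dg \<in> E_space \<beta> \<mu>"
    and limg: "((\<lambda>h. normE \<beta> \<mu> (\<lambda>m. (g (\<epsilon> + h) m - g \<epsilon> m) / h - dg m)) \<longlongrightarrow> 0) (at 0)"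
    using holo_ED(2)[OF g e] by blast
  have limd: "((\<lambda>h. normE \<beta> \<mu> (\<lambda>m. g (\<epsilon> + h) m - g \<epsilon> m)) \<longlongrightarrow> 0) (at 0)"
    by (rule holo_E_cont[OF g S e])
  define bnd where "bnd = (\<lambda>h. K * normE \<beta> \<mu> (\<lambda>m. (f (\<epsilon> + h) m - f \<epsilon> m) / h - df m) * (normE \<beta> \<mu> (g \<epsilon>) + normE \<beta> \<mu> (\<lambda>m. g (\<epsilon> + h) m - g \<epsilon> m))
     + K * normE \<beta> \<mu> df * normE \<beta> \<mu> (\<lambda>m. g (\<epsilon> + h) m - g \<epsilon> m)
     + K * normE \<beta> \<mu> (f \<epsilon>) * normE \<beta> \<mu> (\<lambda>m. (g (\<epsilon> + h) m - g \<epsilon> m) / h - dg m))"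
  have ev: "\<forall>\<^sub>F h in at (0::complex).
     norm (normE \<beta> \<mu> (\<lambda>m. (B (f (\<epsilon> + h)) (g (\<epsilon> + h)) m - B (f \<epsilon>) (g \<epsilon>) m) / h - (B df (g \<epsilon>) m + B (f \<epsilon>) dg m)))
     \<le> bnd h"
    using ev_at0[OF S e]
  proof eventually_elim
    case (elim h)
    have f1: "f (\<epsilon> + h) \<in> E_space \<beta> \<mu>" using holo_ED(1)[OF f] elim by simp
    have g1: "g (\<epsilon> + h) \<in> E_space \<beta> \<mu>" using holo_ED(1)[OF g] elim by simp
    have Df: "(\<lambda>m. (f (\<epsilon> + h) m - f \<epsilon> m) / h - df m) \<in> E_space \<beta> \<mu>"
      by (rule hq_E[OF f0 f1 df])
    have Dg: "(\<lambda>m. (g (\<epsilon> + h) m - g \<epsilon> m) / h - dg m) \<in> E_space \<beta> \<mu>"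
      by (rule hq_E[OF g0 g1 dg])
    have dG: "(\<lambda>m. g (\<epsilon> + h) m - g \<epsilon> m) \<in> E_space \<beta> \<mu>" by (rule E_diff[OF g1 g0])
    have e1: "B (\<lambda>m. (f (\<epsilon> + h) m - f \<epsilon> m) / h - df m) (g (\<epsilon> + h)) = (\<lambda>m. (B (f (\<epsilon> + h)) (g (\<epsilon> + h)) m - B (f \<epsilon>) (g (\<epsilon> + h)) m) / h - B df (g (\<epsilon> + h)) m)"
      by (rule B_hq1[OF f0 f1 df g1])
    have e2: "B df (\<lambda>m. g (\<epsilon> + h) m - g \<epsilon> m) = (\<lambda>m. B df (g (\<epsilon> + h)) m - B df (g \<epsilon>) m)"
      by (rule B_diff2[OF df g1 g0])
    have e3: "B (f \<epsilon>) (\<lambda>m. (g (\<epsilon> + h) m - g \<epsilon> m) / h - dg m) = (\<lambda>m. (B (f \<epsilon>) (g (\<epsilon> + h)) m - B (f \<epsilon>) (g \<epsilon>) m) / h - B (f \<epsilon>) dg m)"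
      by (rule B_hq2[OF g0 g1 dg f0])
    have eq: "(\<lambda>m. (B (f (\<epsilon> + h)) (g (\<epsilon> + h)) m - B (f \<epsilon>) (g \<epsilon>) m) / h - (B df (g \<epsilon>) m + B (f \<epsilon>) dg m))
      = (\<lambda>m. B (\<lambda>m. (f (\<epsilon> + h) m - f \<epsilon> m) / h - df m) (g (\<epsilon> + h)) m + B df (\<lambda>m. g (\<epsilon> + h) m - g \<epsilon> m) m
             + B (f \<epsilon>) (\<lambda>m. (g (\<epsilon> + h) m - g \<epsilon> m) / h - dg m) m)"
      unfolding e1 e2 e3 using elim by (auto simp: field_simps)
    have A: "B (\<lambda>m. (f (\<epsilon> + h) m - f \<epsilon> m) / h - df m) (g (\<epsilon> + h)) \<in> E_space \<beta> \<mu>" by (rule B_E[OF Df g1])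
    have BB: "B df (\<lambda>m. g (\<epsilon> + h) m - g \<epsilon> m) \<in> E_space \<beta> \<mu>" by (rule B_E[OF df dG])
    have C: "B (f \<epsilon>) (\<lambda>m. (g (\<epsilon> + h) m - g \<epsilon> m) / h - dg m) \<in> E_space \<beta> \<mu>" by (rule B_E[OF f0 Dg])
    have n1: "normE \<beta> \<mu> (B (\<lambda>m. (f (\<epsilon> + h) m - f \<epsilon> m) / h - df m) (g (\<epsilon> + h)))
       \<le> K * normE \<beta> \<mu> (\<lambda>m. (f (\<epsilon> + h) m - f \<epsilon> m) / h - df m) * (normE \<beta> \<mu> (g \<epsilon>) + normE \<beta> \<mu> (\<lambda>m. g (\<epsilon> + h) m - g \<epsilon> m))"
      by (rule B_norm'[OF Df g1 normE_split1[OF g0 g1] K])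
    have n2: "normE \<beta> \<mu> (B df (\<lambda>m. g (\<epsilon> + h) m - g \<epsilon> m)) \<le> K * normE \<beta> \<mu> df * normE \<beta> \<mu> (\<lambda>m. g (\<epsilon> + h) m - g \<epsilon> m)"
      by (rule B_norm[OF df dG])
    have n3: "normE \<beta> \<mu> (B (f \<epsilon>) (\<lambda>m. (g (\<epsilon> + h) m - g \<epsilon> m) / h - dg m)) \<le> K * normE \<beta> \<mu> (f \<epsilon>) * normE \<beta> \<mu> (\<lambda>m. (g (\<epsilon> + h) m - g \<epsilon> m) / h - dg m)"
      by (rule B_norm[OF f0 Dg])
    have "normE \<beta> \<mu> (\<lambda>m. B (\<lambda>m. (f (\<epsilon> + h) m - f \<epsilon> m) / h - df m) (g (\<epsilon> + h)) m + B df (\<lambda>m. g (\<epsilon> + h) m - g \<epsilon> m) m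
             + B (f \<epsilon>) (\<lambda>m. (g (\<epsilon> + h) m - g \<epsilon> m) / h - dg m) m) \<le> bnd h"
      using E_add3(2)[OF A BB C] n1 n2 n3 unfolding bnd_def by linarith
    moreover have "0 \<le> normE \<beta> \<mu> (\<lambda>m. B (\<lambda>m. (f (\<epsilon> + h) m - f \<epsilon> m) / h - df m) (g (\<epsilon> + h)) m + B df (\<lambda>m. g (\<epsilon> + h) m - g \<epsilon> m) m
             + B (f \<epsilon>) (\<lambda>m. (g (\<epsilon> + h) m - g \<epsilon> m) / h - dg m) m)"
      by (rule normE_nonneg[OF E_add3(1)[OF A BB C]])
    ultimately show ?case unfolding eq by simp
  qed
  have "(bnd \<longlongrightarrow> K * 0 * (normE \<beta> \<mu> (g \<epsilon>) + 0) + K * normE \<beta> \<mu> df * 0 + K * normE \<beta> \<mu> (f \<epsilon>) * 0) (at 0)"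
    unfolding bnd_def by (intro tendsto_add tendsto_mult tendsto_const limd limf limg)
  then have lim: "(bnd \<longlongrightarrow> 0) (at 0)" by simp
  have G: "(\<lambda>m. B df (g \<epsilon>) m + B (f \<epsilon>) dg m) \<in> E_space \<beta> \<mu>"
    by (rule E_add(1)[OF B_E[OF df g0] B_E[OF f0 dg]])
  show "\<exists>d\<in>E_space \<beta> \<mu>. ((\<lambda>h. normE \<beta> \<mu> (\<lambda>m. (B (f (\<epsilon> + h)) (g (\<epsilon> + h)) m - B (f \<epsilon>) (g \<epsilon>) m) / h - d m)) \<longlongrightarrow> 0) (at 0)"
  proof (rule bexI[where x="\<lambda>m. B df (g \<epsilon>) m + B (f \<epsilon>) dg m"])
    show "((\<lambda>h. normE \<beta> \<mu> (\<lambda>m. (B (f (\<epsilon> + h)) (g (\<epsilon> + h)) m - B (f \<epsilon>) (g \<epsilon>) m) / h - (B df (g \<epsilon>) m + B (f \<epsilon>) dg m))) \<longlongrightarrow> 0) (at 0)"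
      by (rule Lim_null_comparison[OF ev lim])
  qed (rule G)
qed

end


lemma key_half:
  fixes x z s :: real
  assumes "0 < z" "z \<le> 2 * x" "0 < s" "1 \<le> x"
  shows "x powr (-s) \<le> 2 powr s * z powr (-s)"
proof -
  have "z powr s \<le> (2 * x) powr s" using assms by (intro powr_mono2) auto
  also have "\<dots> = 2 powr s * x powr s" using assms by (simp add: powr_mult)
  finally have h: "z powr s \<le> 2 powr s * x powr s" .
  have "x powr (-s) = 1 / x powr s" using assms by (simp add: powr_minus divide_inverse)
  also have "\<dots> \<le> 2 powr s / z powr s"
    using h assms by (simp add: field_simps)
  also have "\<dots> = 2 powr s * z powr (-s)" using assms by (simp add: powr_minus divide_inverse)
  finally show ?thesis .
qed

lemma key_ineq:
  fixes x y z s \<mu> :: real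
  assumes "1 \<le> x" "1 \<le> y" "z \<le> x + y" "0 < z" "0 < s" "s \<le> \<mu>"
  shows "x powr (-\<mu>) * y powr (-s) \<le> 2 powr s * z powr (-s) * (y powr (-s) + x powr (-\<mu>))"
proof (cases "y \<le> x")
  case True
  have a: "x powr (-s) \<le> 2 powr s * z powr (-s)" by (rule key_half) (use assms True in auto)
  have b: "x powr (-\<mu>) \<le> x powr (-s)" using assms by (intro powr_mono) auto
  have yp: "0 \<le> y powr (-s)" by simp
  have "x powr (-\<mu>) * y powr (-s) \<le> x powr (-s) * y powr (-s)" by (rule mult_right_mono[OF b yp])
  also have "\<dots> \<le> 2 powr s * z powr (-s) * y powr (-s)" by (rule mult_right_mono[OF a yp])
  also have "\<dots> \<le> 2 powr s * z powr (-s) * (y powr (-s) + x powr (-\<mu>))"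
    by (intro mult_left_mono) auto
  finally show ?thesis .
next
  case False
  have a: "y powr (-s) \<le> 2 powr s * z powr (-s)" by (rule key_half) (use assms False in auto)
  have xp: "0 \<le> x powr (-\<mu>)" by simp
  have "x powr (-\<mu>) * y powr (-s) \<le> x powr (-\<mu>) * (2 powr s * z powr (-s))" by (rule mult_left_mono[OF a xp])
  also have "\<dots> \<le> 2 powr s * z powr (-s) * (y powr (-s) + x powr (-\<mu>))"
    by (simp add: algebra_simps)
  finally show ?thesis .
qed

lemma poly_upper: "\<exists>c\<ge>0. \<forall>z::complex. cmod (poly R z) \<le> c * (1 + cmod z) ^ degree R"
proof (intro exI conjI allI)
  show "0 \<le> (\<Sum>i\<le>degree R. cmod (coeff R i))" by (simp add: sum_nonneg)
  fix z :: complex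
  have "cmod (poly R z) = cmod (\<Sum>i\<le>degree R. coeff R i * z ^ i)" by (simp add: poly_altdef)
  also have "\<dots> \<le> (\<Sum>i\<le>degree R. cmod (coeff R i * z ^ i))" by (rule norm_sum)
  also have "\<dots> \<le> (\<Sum>i\<le>degree R. cmod (coeff R i) * (1 + cmod z) ^ degree R)"
  proof (rule sum_mono)
    fix i assume i: "i \<in> {..degree R}"
    have "cmod z ^ i \<le> (1 + cmod z) ^ i" by (intro power_mono) auto
    also have "\<dots> \<le> (1 + cmod z) ^ degree R" using i by (intro power_increasing) auto
    finally show "cmod (coeff R i * z ^ i) \<le> cmod (coeff R i) * (1 + cmod z) ^ degree R"
      by (simp add: norm_mult norm_power mult_left_mono)
  qed
  also have "\<dots> = (\<Sum>i\<le>degree R. cmod (coeff R i)) * (1 + cmod z) ^ degree R"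
    by (simp add: sum_distrib_right)
  finally show "cmod (poly R z) \<le> (\<Sum>i\<le>degree R. cmod (coeff R i)) * (1 + cmod z) ^ degree R" .
qed

lemma poly_ratio:
  fixes P Q :: "complex poly"
  assumes deg: "degree P \<le> degree Q" and Q: "\<And>m::real. poly Q (\<i> * of_real m) \<noteq> 0"
  shows "\<exists>K. \<forall>m::real. cmod (poly P (\<i> * of_real m)) \<le> K * cmod (poly Q (\<i> * of_real m))"
proof -
  have Q0: "Q \<noteq> 0" using Q[of 0] by auto
  obtain L where L: "((\<lambda>z. poly P z / poly Q z) \<longlongrightarrow> L) at_infinity"
  proof (cases "degree P < degree Q")
    case True
    show ?thesis by (rule that[OF poly_divide_tendsto_0_at_infinity[OF True]])
  next
    case False
    then have d: "degree P = degree Q" using deg by simp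
    have lq: "lead_coeff Q \<noteq> 0" using Q0 by simp
    have lim: "((\<lambda>z. (poly P z / z ^ degree P) / (poly Q z / z ^ degree Q)) \<longlongrightarrow> lead_coeff P / lead_coeff Q) at_infinity"
      by (intro tendsto_divide poly_divide_tendsto_aux lq)
    have dd: "c \<noteq> 0 \<Longrightarrow> (a / c) / (b' / c) = a / b'" for a b' c :: complex
      by (cases "b' = 0") (simp_all add: field_simps)
    have ev: "\<forall>\<^sub>F z in at_infinity. (poly P z / z ^ degree P) / (poly Q z / z ^ degree Q) = poly P z / poly Q z"
      unfolding eventually_at_infinity
    proof (intro exI[of _ 1] allI impI)
      fix z :: complex assume "1 \<le> norm z"
      then have "z ^ degree Q \<noteq> 0" by auto
      then show "(poly P z / z ^ degree P) / (poly Q z / z ^ degree Q) = poly P z / poly Q z"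
        unfolding d by (rule dd)
    qed
    show ?thesis by (rule that[OF tendsto_cong[THEN iffD1, OF ev lim]])
  qed
  have "\<forall>\<^sub>F z in at_infinity. cmod (poly P z / poly Q z) < cmod L + 1"
    using order_tendstoD(2)[OF tendsto_norm[OF L], of "cmod L + 1"] by simp
  then obtain b where b: "\<And>z. b \<le> cmod z \<Longrightarrow> cmod (poly P z / poly Q z) < cmod L + 1"
    unfolding eventually_at_infinity by blast
  define f where "f = (\<lambda>m::real. cmod (poly P (\<i> * of_real m)) / cmod (poly Q (\<i> * of_real m)))"
  have "continuous_on {-b..b} f"
    unfolding f_def using Q by (intro continuous_intros) auto
  then have "compact (f ` {-b..b})" by (intro compact_continuous_image) auto
  then have "bounded (f ` {-b..b})" by (rule compact_imp_bounded)
  then obtain M where M0: "\<forall>x\<in>f ` {-b..b}. norm x \<le> M" unfolding bounded_iff by blast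
  have M: "norm (f m) \<le> M" if "m \<in> {-b..b}" for m using M0 that by simp
  show ?thesis
  proof (intro exI[of _ "max (cmod L + 1) M"] allI)
    fix m :: real
    have qp: "cmod (poly Q (\<i> * of_real m)) > 0" using Q[of m] by simp
    have "cmod (poly P (\<i> * of_real m)) / cmod (poly Q (\<i> * of_real m)) \<le> max (cmod L + 1) M"
    proof (cases "b \<le> \<bar>m\<bar>")
      case True
      then have "cmod (poly P (\<i> * of_real m) / poly Q (\<i> * of_real m)) < cmod L + 1"
        by (intro b) (simp add: norm_mult)
      then show ?thesis by (simp add: norm_divide)
    next
      case False
      then have "norm (f m) \<le> M" by (intro M) auto
      then show ?thesis unfolding f_def by simp
    qed
    then show "cmod (poly P (\<i> * of_real m)) \<le> max (cmod L + 1) M * cmod (poly Q (\<i> * of_real m))"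
      using qp by (simp add: field_simps)
  qed
qed

lemma Q_lower:
  fixes Q :: "complex poly"
  assumes r: "r \<le> degree Q" and Q: "\<And>m::real. poly Q (\<i> * of_real m) \<noteq> 0"
  shows "\<exists>c>0. \<forall>m::real. c * (1 + \<bar>m\<bar>) ^ r \<le> cmod (poly Q (\<i> * of_real m))"
proof -
  define P :: "complex poly" where "P = [:1, 1:] ^ r"
  have dP: "degree P = r" unfolding P_def by (subst degree_power_eq) auto
  obtain K where K: "\<And>m::real. cmod (poly P (\<i> * of_real m)) \<le> K * cmod (poly Q (\<i> * of_real m))"
    using poly_ratio[of P Q] r Q dP by auto
  define K' where "K' = max K 1"
  have K'pos: "K' > 0" unfolding K'_def by simp
  show ?thesis
  proof (intro exI[of _ "1 / (2 ^ r * K')"] conjI allI)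
    show "0 < 1 / (2 ^ r * K')" using K'pos by simp
    fix m :: real
    have b1: "1 + \<bar>m\<bar> \<le> 2 * cmod (1 + \<i> * of_real m)"
    proof -
      have "1 \<le> cmod (1 + \<i> * of_real m)" using abs_Re_le_cmod[of "1 + \<i> * of_real m"] by simp
      moreover have "\<bar>m\<bar> \<le> cmod (1 + \<i> * of_real m)" using abs_Im_le_cmod[of "1 + \<i> * of_real m"] by simp
      ultimately show ?thesis by linarith
    qed
    have "(1 + \<bar>m\<bar>) ^ r \<le> (2 * cmod (1 + \<i> * of_real m)) ^ r"
      by (rule power_mono[OF b1]) simp
    also have "\<dots> = 2 ^ r * cmod (poly P (\<i> * of_real m))"
      unfolding P_def by (simp add: norm_power power_mult_distrib)
    also have "\<dots> \<le> 2 ^ r * (K' * cmod (poly Q (\<i> * of_real m)))"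
    proof -
      have "K * cmod (poly Q (\<i> * of_real m)) \<le> K' * cmod (poly Q (\<i> * of_real m))"
        unfolding K'_def by (intro mult_right_mono) auto
      then show ?thesis using K[of m] by simp
    qed
    finally show "1 / (2 ^ r * K') * (1 + \<bar>m\<bar>) ^ r \<le> cmod (poly Q (\<i> * of_real m))"
      using K'pos by (simp add: field_simps)
  qed
qed

lemma cont_g: "continuous_on UNIV (\<lambda>x::real. (1 + \<bar>x\<bar>) powr (-t))"
  by (intro continuous_intros) auto

lemma meas_g: "(\<lambda>x::real. (1 + \<bar>x\<bar>) powr (-t)) \<in> borel_measurable lebesgue"
  using continuous_imp_measurable_on_sets_lebesgue[OF cont_g[of t]] by (simp add: lebesgue_on_UNIV_eq)

lemma int_g:
  assumes t: "t > 1"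
  shows "integrable lebesgue (\<lambda>x::real. (1 + \<bar>x\<bar>) powr (-t))"
proof -
  have "((\<lambda>x::real. x powr (-t)) has_integral (-(1 powr (-t+1)) / (-t+1))) {1..}"
    by (rule has_integral_powr_to_inf) (use t in auto)
  then have "(\<lambda>x::real. x powr (-t)) integrable_on {1..}" by blast
  then have "(\<lambda>x::real. x powr (-t)) absolutely_integrable_on {1..}"
    by (rule nonnegative_absolutely_integrable_1) simp
  then have f0: "integrable lebesgue (\<lambda>x::real. indicator {1..} x *\<^sub>R x powr (-t))"
    by (simp add: set_integrable_def)
  define f0 where "f0 = (\<lambda>x::real. indicator {1..} x *\<^sub>R x powr (-t))"
  have i1: "integrable lebesgue (\<lambda>x. f0 (1 + 1 * x))"
    by (rule lebesgue_integrable_real_affine) (use f0 in \<open>auto simp: f0_def\<close>)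
  have i2: "integrable lebesgue (\<lambda>x. f0 (1 + (-1) * x))"
    by (rule lebesgue_integrable_real_affine) (use f0 in \<open>auto simp: f0_def\<close>)
  have i3: "integrable lebesgue (\<lambda>x. f0 (1 + 1 * x) + f0 (1 + (-1) * x))"
    by (rule Bochner_Integration.integrable_add[OF i1 i2])
  show ?thesis
  proof (rule Bochner_Integration.integrable_bound[OF i3 meas_g])
    show "AE x in lebesgue. norm ((1 + \<bar>x\<bar>) powr (-t)) \<le> norm (f0 (1 + 1 * x) + f0 (1 + (-1) * x))"
    proof (rule AE_I2)
      fix x :: real
      have n1: "0 \<le> f0 (1 + 1 * x)" "0 \<le> f0 (1 + (-1) * x)" unfolding f0_def by (auto simp: indicator_def)
      show "norm ((1 + \<bar>x\<bar>) powr (-t)) \<le> norm (f0 (1 + 1 * x) + f0 (1 + (-1) * x))"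
      proof (cases "x \<ge> 0")
        case True
        then have "f0 (1 + 1 * x) = (1 + \<bar>x\<bar>) powr (-t)" unfolding f0_def by (simp add: indicator_def)
        then show ?thesis using n1 by simp
      next
        case False
        then have "f0 (1 + (-1) * x) = (1 + \<bar>x\<bar>) powr (-t)" unfolding f0_def by (simp add: indicator_def)
        then show ?thesis using n1 by simp
      qed
    qed
  qed
qed

lemma int_g_shift:
  assumes t: "t > 1"
  shows "integrable lebesgue (\<lambda>x::real. (1 + \<bar>m - x\<bar>) powr (-t))"
    and "integral\<^sup>L lebesgue (\<lambda>x::real. (1 + \<bar>m - x\<bar>) powr (-t)) = integral\<^sup>L lebesgue (\<lambda>x::real. (1 + \<bar>x\<bar>) powr (-t))"
proof -
  have "integrable lebesgue (\<lambda>x::real. (\<lambda>y. (1 + \<bar>y\<bar>) powr (-t)) (m + (-1) * x))"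
    by (rule lebesgue_integrable_real_affine[OF int_g[OF t]]) simp
  then show "integrable lebesgue (\<lambda>x::real. (1 + \<bar>m - x\<bar>) powr (-t))" by simp
  have "integral\<^sup>L lebesgue (\<lambda>y::real. (1 + \<bar>y\<bar>) powr (-t)) = \<bar>-1\<bar> *\<^sub>R integral\<^sup>L lebesgue (\<lambda>x::real. (\<lambda>y. (1 + \<bar>y\<bar>) powr (-t)) (m + (-1) * x))"
    by (rule lebesgue_integral_real_affine) simp
  then show "integral\<^sup>L lebesgue (\<lambda>x::real. (1 + \<bar>m - x\<bar>) powr (-t)) = integral\<^sup>L lebesgue (\<lambda>x::real. (1 + \<bar>x\<bar>) powr (-t))"
    by simp
qed


definition cint :: "complex poly \<Rightarrow> (real \<Rightarrow> complex) \<Rightarrow> (real \<Rightarrow> complex) \<Rightarrow> real \<Rightarrow> real \<Rightarrow> complex" where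
  "cint R a b m = (\<lambda>m1. a (m - m1) * poly R (\<i> * complex_of_real m1) * b m1)"

definition cL :: "complex poly \<Rightarrow> (real \<Rightarrow> complex) \<Rightarrow> (real \<Rightarrow> complex) \<Rightarrow> real \<Rightarrow> complex" where
  "cL R a b m = integral\<^sup>L lebesgue (cint R a b m)"

lemma E_pt2:
  assumes "a \<in> E_space \<beta> \<mu>"
  shows "cmod (a x) \<le> normE \<beta> \<mu> a * ((1 + \<bar>x\<bar>) powr (-\<mu>) * exp (- \<beta> * \<bar>x\<bar>))"
proof -
  have "1 / wt \<beta> \<mu> x = (1 + \<bar>x\<bar>) powr (-\<mu>) * exp (- \<beta> * \<bar>x\<bar>)"
    unfolding wt_def by (simp add: powr_minus exp_minus field_simps)
  then show ?thesis using normE_pt[OF assms, of x] by (simp add: divide_inverse)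
qed

lemma E_pt3:
  assumes "a \<in> E_space \<beta> \<mu>" "\<beta> \<ge> 0" "\<mu> \<ge> 0"
  shows "cmod (a x) \<le> normE \<beta> \<mu> a"
proof -
  have "cmod (a x) \<le> normE \<beta> \<mu> a / wt \<beta> \<mu> x" by (rule normE_pt[OF assms(1)])
  also have "\<dots> \<le> normE \<beta> \<mu> a"
  proof -
    have "normE \<beta> \<mu> a * 1 \<le> normE \<beta> \<mu> a * wt \<beta> \<mu> x"
      by (rule mult_left_mono[OF wt_ge1[OF assms(2,3)] normE_nonneg[OF assms(1)]])
    then show ?thesis using wt_pos[of \<beta> \<mu> x] by (simp add: divide_le_eq)
  qed
  finally show ?thesis .
qed

lemma E_pt4:
  assumes "a \<in> E_space \<beta> \<mu>" "\<beta> \<ge> 0"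
  shows "cmod (a x) \<le> normE \<beta> \<mu> a * (1 + \<bar>x\<bar>) powr (-\<mu>)"
proof -
  have "exp (- \<beta> * \<bar>x\<bar>) \<le> 1" using assms(2) by simp
  then have "(1 + \<bar>x\<bar>) powr (-\<mu>) * exp (- \<beta> * \<bar>x\<bar>) \<le> (1 + \<bar>x\<bar>) powr (-\<mu>)"
    by (intro mult_left_le) auto
  then show ?thesis using E_pt2[OF assms(1), of x] normE_nonneg[OF assms(1)]
    by (meson mult_left_mono order_trans)
qed

lemma cint_cont:
  assumes "a \<in> E_space \<beta> \<mu>" "b \<in> E_space \<beta> \<mu>"
  shows "continuous_on UNIV (cint R a b m)"
proof -
  have ca: "continuous_on UNIV a" and cb: "continuous_on UNIV b" using E_cont assms by auto
  have "continuous_on UNIV (\<lambda>m1. a (m - m1))"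
    by (rule continuous_on_compose2[OF ca]) (auto intro: continuous_intros)
  then show ?thesis unfolding cint_def using cb by (intro continuous_intros) auto
qed

lemma cint_meas:
  assumes "a \<in> E_space \<beta> \<mu>" "b \<in> E_space \<beta> \<mu>"
  shows "cint R a b m \<in> borel_measurable lebesgue"
  using continuous_imp_measurable_on_sets_lebesgue[OF cint_cont[OF assms]] by (simp add: lebesgue_on_UNIV_eq)

lemma cint_bound1:
  assumes a: "a \<in> E_space \<beta> \<mu>" and b: "b \<in> E_space \<beta> \<mu>" and \<beta>: "\<beta> \<ge> 0" and \<mu>: "\<mu> \<ge> 0"
    and c: "\<And>z. cmod (poly R z) \<le> c * (1 + cmod z) ^ degree R"
  shows "cmod (cint R a b m m1) \<le> normE \<beta> \<mu> a * c * normE \<beta> \<mu> b * (1 + \<bar>m1\<bar>) powr (real (degree R) - \<mu>)"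
proof -
  have "cmod (poly R 0) \<le> c" using c[of 0] by simp
  then have c0: "0 \<le> c" using norm_ge_zero[of "poly R 0"] by linarith
  have p: "cmod (poly R (\<i> * complex_of_real m1)) \<le> c * (1 + \<bar>m1\<bar>) ^ degree R"
    using c[of "\<i> * complex_of_real m1"] by (simp add: norm_mult)
  have A: "cmod (a (m - m1)) \<le> normE \<beta> \<mu> a" by (rule E_pt3[OF a \<beta> \<mu>])
  have B: "cmod (b m1) \<le> normE \<beta> \<mu> b * (1 + \<bar>m1\<bar>) powr (-\<mu>)" by (rule E_pt4[OF b \<beta>])
  have "cmod (cint R a b m m1) = cmod (a (m - m1)) * cmod (poly R (\<i> * complex_of_real m1)) * cmod (b m1)"
    unfolding cint_def by (simp add: norm_mult)
  also have "\<dots> \<le> normE \<beta> \<mu> a * (c * (1 + \<bar>m1\<bar>) ^ degree R) * (normE \<beta> \<mu> b * (1 + \<bar>m1\<bar>) powr (-\<mu>))"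
    by (intro mult_mono A B p) (simp_all add: normE_nonneg[OF a] c0)
  also have "(1 + \<bar>m1\<bar>) ^ degree R = (1 + \<bar>m1\<bar>) powr real (degree R)"
    by (simp add: powr_realpow add_pos_nonneg)
  also have "normE \<beta> \<mu> a * (c * (1 + \<bar>m1\<bar>) powr real (degree R)) * (normE \<beta> \<mu> b * (1 + \<bar>m1\<bar>) powr - \<mu>)
     = normE \<beta> \<mu> a * c * normE \<beta> \<mu> b * ((1 + \<bar>m1\<bar>) powr real (degree R) * (1 + \<bar>m1\<bar>) powr - \<mu>)"
    by (simp add: algebra_simps)
  also have "(1 + \<bar>m1\<bar>) powr real (degree R) * (1 + \<bar>m1\<bar>) powr - \<mu> = (1 + \<bar>m1\<bar>) powr (real (degree R) - \<mu>)"
    by (simp add: powr_add[symmetric])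
  finally show ?thesis .
qed

lemma cint_int:
  assumes a: "a \<in> E_space \<beta> \<mu>" and b: "b \<in> E_space \<beta> \<mu>" and \<beta>: "\<beta> \<ge> 0" and \<mu>: "\<mu> > real (degree R) + 1"
  shows "integrable lebesgue (cint R a b m)"
proof -
  obtain c where c0: "c \<ge> 0" and c: "\<And>z. cmod (poly R z) \<le> c * (1 + cmod z) ^ degree R"
    using poly_upper[of R] by blast
  have ig: "integrable lebesgue (\<lambda>x::real. normE \<beta> \<mu> a * c * normE \<beta> \<mu> b * (1 + \<bar>x\<bar>) powr (-(\<mu> - real (degree R))))"
    by (intro Bochner_Integration.integrable_mult_right int_g) (use \<mu> in simp)
  show ?thesis
  proof (rule Bochner_Integration.integrable_bound[OF ig cint_meas[OF a b]])
    show "AE x in lebesgue. norm (cint R a b m x) \<le> norm (normE \<beta> \<mu> a * c * normE \<beta> \<mu> b * (1 + \<bar>x\<bar>) powr (-(\<mu> - real (degree R))))"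
    proof (rule AE_I2)
      fix x
      have "norm (cint R a b m x) \<le> normE \<beta> \<mu> a * c * normE \<beta> \<mu> b * (1 + \<bar>x\<bar>) powr (real (degree R) - \<mu>)"
        using cint_bound1[OF a b \<beta> _ c] \<mu> by simp
      also have "\<dots> \<le> norm (normE \<beta> \<mu> a * c * normE \<beta> \<mu> b * (1 + \<bar>x\<bar>) powr (-(\<mu> - real (degree R))))"
        by simp
      finally show "norm (cint R a b m x) \<le> norm (normE \<beta> \<mu> a * c * normE \<beta> \<mu> b * (1 + \<bar>x\<bar>) powr (-(\<mu> - real (degree R))))" .
    qed
  qed
qed

lemma cL_cont:
  assumes a: "a \<in> E_space \<beta> \<mu>" and b: "b \<in> E_space \<beta> \<mu>" and \<beta>: "\<beta> \<ge> 0" and \<mu>: "\<mu> > real (degree R) + 1"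
  shows "continuous_on UNIV (cL R a b)"
proof (rule continuous_on_sequentiallyI)
  fix u :: "nat \<Rightarrow> real" and m assume u: "u \<longlonglongrightarrow> m"
  obtain c where c0: "c \<ge> 0" and c: "\<And>z. cmod (poly R z) \<le> c * (1 + cmod z) ^ degree R"
    using poly_upper[of R] by blast
  have ig: "integrable lebesgue (\<lambda>x::real. normE \<beta> \<mu> a * c * normE \<beta> \<mu> b * (1 + \<bar>x\<bar>) powr (-(\<mu> - real (degree R))))"
    by (intro Bochner_Integration.integrable_mult_right int_g) (use \<mu> in simp)
  have ca: "continuous_on UNIV a" using E_cont[OF a] .
  have "(\<lambda>i. integral\<^sup>L lebesgue (cint R a b (u i))) \<longlonglongrightarrow> integral\<^sup>L lebesgue (cint R a b m)"
  proof (rule integral_dominated_convergence[OF cint_meas[OF a b] cint_meas[OF a b] ig])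
    show "AE x in lebesgue. (\<lambda>i. cint R a b (u i) x) \<longlonglongrightarrow> cint R a b m x"
    proof (rule AE_I2)
      fix x
      have "(\<lambda>i. u i - x) \<longlonglongrightarrow> m - x" by (intro tendsto_intros u)
      then have "(\<lambda>i. a (u i - x)) \<longlonglongrightarrow> a (m - x)"
        by (rule isCont_tendsto_compose[rotated]) (use ca in \<open>simp add: continuous_on_eq_continuous_at\<close>)
      then show "(\<lambda>i. cint R a b (u i) x) \<longlonglongrightarrow> cint R a b m x"
        unfolding cint_def by (intro tendsto_intros)
    qed
    fix i
    show "AE x in lebesgue. norm (cint R a b (u i) x) \<le> normE \<beta> \<mu> a * c * normE \<beta> \<mu> b * (1 + \<bar>x\<bar>) powr (-(\<mu> - real (degree R)))"
      using cint_bound1[OF a b \<beta> _ c, of "u i"] \<mu> by (intro AE_I2) simp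
  qed
  then show "(\<lambda>i. cL R a b (u i)) \<longlonglongrightarrow> cL R a b m" unfolding cL_def .
qed

lemma cint_bound2:
  assumes a: "a \<in> E_space \<beta> \<mu>" and b: "b \<in> E_space \<beta> \<mu>" and \<beta>: "\<beta> \<ge> 0" and \<mu>: "\<mu> > real (degree R) + 1"
    and c0: "c \<ge> 0" and c: "\<And>z. cmod (poly R z) \<le> c * (1 + cmod z) ^ degree R"
  shows "cmod (cint R a b m m1) \<le> normE \<beta> \<mu> a * normE \<beta> \<mu> b * c * exp (- \<beta> * \<bar>m\<bar>) * 2 powr (\<mu> - real (degree R))
     * (1 + \<bar>m\<bar>) powr (-(\<mu> - real (degree R))) * ((1 + \<bar>m1\<bar>) powr (-(\<mu> - real (degree R))) + (1 + \<bar>m - m1\<bar>) powr (-\<mu>))"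
proof -
  define s where "s = \<mu> - real (degree R)"
  define x where "x = 1 + \<bar>m - m1\<bar>"
  define y where "y = 1 + \<bar>m1\<bar>"
  define z where "z = 1 + \<bar>m\<bar>"
  have s: "0 < s" "s \<le> \<mu>" using \<mu> unfolding s_def by auto
  have na: "0 \<le> normE \<beta> \<mu> a" and nb: "0 \<le> normE \<beta> \<mu> b" using normE_nonneg a b by auto
  have A: "cmod (a (m - m1)) \<le> normE \<beta> \<mu> a * (x powr (-\<mu>) * exp (- \<beta> * \<bar>m - m1\<bar>))"
    unfolding x_def by (rule E_pt2[OF a])
  have B: "cmod (b m1) \<le> normE \<beta> \<mu> b * (y powr (-\<mu>) * exp (- \<beta> * \<bar>m1\<bar>))"
    unfolding y_def by (rule E_pt2[OF b])
  have p: "cmod (poly R (\<i> * complex_of_real m1)) \<le> c * y powr real (degree R)"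
    using c[of "\<i> * complex_of_real m1"] by (simp add: norm_mult y_def powr_realpow add_pos_nonneg)
  have "cmod (cint R a b m m1) = cmod (a (m - m1)) * cmod (poly R (\<i> * complex_of_real m1)) * cmod (b m1)"
    unfolding cint_def by (simp add: norm_mult)
  also have "\<dots> \<le> (normE \<beta> \<mu> a * (x powr (-\<mu>) * exp (- \<beta> * \<bar>m - m1\<bar>))) * (c * y powr real (degree R))
        * (normE \<beta> \<mu> b * (y powr (-\<mu>) * exp (- \<beta> * \<bar>m1\<bar>)))"
    by (intro mult_mono A B p) (simp_all add: na nb c0)
  also have "\<dots> = normE \<beta> \<mu> a * normE \<beta> \<mu> b * c * (exp (- \<beta> * \<bar>m - m1\<bar>) * exp (- \<beta> * \<bar>m1\<bar>))
        * (x powr (-\<mu>) * (y powr real (degree R) * y powr (-\<mu>)))"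
    by (simp add: algebra_simps)
  also have "y powr real (degree R) * y powr (-\<mu>) = y powr (-s)"
    unfolding s_def by (simp add: powr_add[symmetric])
  also have "exp (- \<beta> * \<bar>m - m1\<bar>) * exp (- \<beta> * \<bar>m1\<bar>) \<le> exp (- \<beta> * \<bar>m\<bar>)"
  proof -
    have "\<bar>m\<bar> \<le> \<bar>m - m1\<bar> + \<bar>m1\<bar>" by linarith
    then have "\<beta> * \<bar>m\<bar> \<le> \<beta> * (\<bar>m - m1\<bar> + \<bar>m1\<bar>)" using \<beta> by (rule mult_left_mono)
    then have "- \<beta> * \<bar>m - m1\<bar> + - \<beta> * \<bar>m1\<bar> \<le> - \<beta> * \<bar>m\<bar>"
      by (simp add: algebra_simps)
    then show ?thesis by (simp add: exp_add[symmetric])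
  qed
  then have "normE \<beta> \<mu> a * normE \<beta> \<mu> b * c * (exp (- \<beta> * \<bar>m - m1\<bar>) * exp (- \<beta> * \<bar>m1\<bar>)) * (x powr (-\<mu>) * y powr (-s))
      \<le> normE \<beta> \<mu> a * normE \<beta> \<mu> b * c * exp (- \<beta> * \<bar>m\<bar>) * (x powr (-\<mu>) * y powr (-s))"
    by (intro mult_right_mono mult_left_mono) (simp_all add: na nb c0)
  also have "x powr (-\<mu>) * y powr (-s) \<le> 2 powr s * z powr (-s) * (y powr (-s) + x powr (-\<mu>))"
    by (rule key_ineq) (use s in \<open>auto simp: x_def y_def z_def\<close>)
  then have "normE \<beta> \<mu> a * normE \<beta> \<mu> b * c * exp (- \<beta> * \<bar>m\<bar>) * (x powr (-\<mu>) * y powr (-s))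
     \<le> normE \<beta> \<mu> a * normE \<beta> \<mu> b * c * exp (- \<beta> * \<bar>m\<bar>) * (2 powr s * z powr (-s) * (y powr (-s) + x powr (-\<mu>)))"
    by (intro mult_left_mono) (simp_all add: na nb c0)
  finally show ?thesis unfolding s_def x_def y_def z_def by (simp add: algebra_simps)
qed

lemma cL_wbound:
  assumes \<beta>: "\<beta> \<ge> 0" and \<mu>: "\<mu> > real (degree R) + 1"
  shows "\<exists>K\<ge>0. \<forall>a b m. a \<in> E_space \<beta> \<mu> \<longrightarrow> b \<in> E_space \<beta> \<mu> \<longrightarrow>
     cmod (cL R a b m) \<le> K * normE \<beta> \<mu> a * normE \<beta> \<mu> b * exp (- \<beta> * \<bar>m\<bar>) * (1 + \<bar>m\<bar>) powr (-(\<mu> - real (degree R)))"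
proof -
  obtain c where c0: "c \<ge> 0" and c: "\<And>z. cmod (poly R z) \<le> c * (1 + cmod z) ^ degree R"
    using poly_upper[of R] by blast
  define s where "s = \<mu> - real (degree R)"
  have s1: "s > 1" "\<mu> > 1" using \<mu> unfolding s_def by auto
  define J where "J = (\<lambda>t. integral\<^sup>L lebesgue (\<lambda>x::real. (1 + \<bar>x\<bar>) powr (-t)))"
  have J0: "J t \<ge> 0" for t unfolding J_def by (rule integral_nonneg_AE) simp
  define K where "K = c * 2 powr s * (J s + J \<mu>)"
  have K0: "K \<ge> 0" unfolding K_def using c0 J0 by simp
  show ?thesis
  proof (intro exI[of _ K] conjI allI impI K0)
    fix a b m assume a: "a \<in> E_space \<beta> \<mu>" and b: "b \<in> E_space \<beta> \<mu>"
    define C where "C = normE \<beta> \<mu> a * normE \<beta> \<mu> b * c * exp (- \<beta> * \<bar>m\<bar>) * 2 powr s * (1 + \<bar>m\<bar>) powr (-s)"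
    define g where "g = (\<lambda>m1. C * ((1 + \<bar>m1\<bar>) powr (-s) + (1 + \<bar>m - m1\<bar>) powr (-\<mu>)))"
    have i1: "integrable lebesgue (\<lambda>x::real. (1 + \<bar>x\<bar>) powr (-s))" by (rule int_g[OF s1(1)])
    have i2: "integrable lebesgue (\<lambda>x::real. (1 + \<bar>m - x\<bar>) powr (-\<mu>))" by (rule int_g_shift(1)[OF s1(2)])
    have ig: "integrable lebesgue g" unfolding g_def
      by (intro Bochner_Integration.integrable_mult_right Bochner_Integration.integrable_add i1 i2)
    have "cmod (cL R a b m) \<le> integral\<^sup>L lebesgue g"
      unfolding cL_def
    proof (rule Bochner_Integration.integral_norm_bound_integral[OF cint_int[OF a b \<beta> \<mu>] ig])
      fix x show "norm (cint R a b m x) \<le> g x"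
        using cint_bound2[OF a b \<beta> \<mu> c0 c, of m x] unfolding g_def C_def s_def by (simp add: algebra_simps)
    qed
    also have "integral\<^sup>L lebesgue g = C * (J s + J \<mu>)"
      unfolding g_def J_def using i1 i2 int_g_shift(2)[OF s1(2), of m] by simp
    also have "\<dots> = K * normE \<beta> \<mu> a * normE \<beta> \<mu> b * exp (- \<beta> * \<bar>m\<bar>) * (1 + \<bar>m\<bar>) powr (-(\<mu> - real (degree R)))"
      unfolding C_def K_def s_def by (simp add: algebra_simps)
    finally show "cmod (cL R a b m) \<le> K * normE \<beta> \<mu> a * normE \<beta> \<mu> b * exp (- \<beta> * \<bar>m\<bar>) * (1 + \<bar>m\<bar>) powr (-(\<mu> - real (degree R)))" .
  qed
qed

definition BQ :: "complex poly \<Rightarrow> complex poly \<Rightarrow> (real \<Rightarrow> complex) \<Rightarrow> (real \<Rightarrow> complex) \<Rightarrow> real \<Rightarrow> complex" where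
  "BQ R Q a b = (\<lambda>m. cL R a b m / poly Q (\<i> * complex_of_real m))"

lemma cL_lin1:
  assumes a1: "a1 \<in> E_space \<beta> \<mu>" and a2: "a2 \<in> E_space \<beta> \<mu>" and b: "b \<in> E_space \<beta> \<mu>"
    and \<beta>: "\<beta> \<ge> 0" and \<mu>: "\<mu> > real (degree R) + 1"
  shows "cL R (\<lambda>m. x * a1 m + y * a2 m) b m = x * cL R a1 b m + y * cL R a2 b m"
proof -
  have "cint R (\<lambda>m. x * a1 m + y * a2 m) b m = (\<lambda>m1. x * cint R a1 b m m1 + y * cint R a2 b m m1)"
    unfolding cint_def by (simp add: algebra_simps)
  then show ?thesis unfolding cL_def
    using cint_int[OF a1 b \<beta> \<mu>, of m] cint_int[OF a2 b \<beta> \<mu>, of m] by simp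
qed

lemma cL_lin2:
  assumes a: "a \<in> E_space \<beta> \<mu>" and b1: "b1 \<in> E_space \<beta> \<mu>" and b2: "b2 \<in> E_space \<beta> \<mu>"
    and \<beta>: "\<beta> \<ge> 0" and \<mu>: "\<mu> > real (degree R) + 1"
  shows "cL R a (\<lambda>m. x * b1 m + y * b2 m) m = x * cL R a b1 m + y * cL R a b2 m"
proof -
  have "cint R a (\<lambda>m. x * b1 m + y * b2 m) m = (\<lambda>m1. x * cint R a b1 m m1 + y * cint R a b2 m m1)"
    unfolding cint_def by (simp add: algebra_simps)
  then show ?thesis unfolding cL_def
    using cint_int[OF a b1 \<beta> \<mu>, of m] cint_int[OF a b2 \<beta> \<mu>, of m] by simp
qed

lemma BQ_props:
  assumes \<beta>: "\<beta> \<ge> 0" and \<mu>: "\<mu> > real (degree R) + 1" and dQ: "degree R \<le> degree Q"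
    and Q: "\<And>m::real. poly Q (\<i> * complex_of_real m) \<noteq> 0"
  shows "\<exists>K\<ge>0. \<forall>a b. a \<in> E_space \<beta> \<mu> \<longrightarrow> b \<in> E_space \<beta> \<mu> \<longrightarrow>
      BQ R Q a b \<in> E_space \<beta> \<mu> \<and> normE \<beta> \<mu> (BQ R Q a b) \<le> K * normE \<beta> \<mu> a * normE \<beta> \<mu> b"
proof -
  obtain K where K0: "K \<ge> 0" and K: "\<And>a b m. a \<in> E_space \<beta> \<mu> \<Longrightarrow> b \<in> E_space \<beta> \<mu> \<Longrightarrow>
     cmod (cL R a b m) \<le> K * normE \<beta> \<mu> a * normE \<beta> \<mu> b * exp (- \<beta> * \<bar>m\<bar>) * (1 + \<bar>m\<bar>) powr (-(\<mu> - real (degree R)))"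
    using cL_wbound[OF \<beta> \<mu>] by blast
  obtain cq where cq: "cq > 0" and cqb: "\<And>m::real. cq * (1 + \<bar>m\<bar>) ^ degree R \<le> cmod (poly Q (\<i> * of_real m))"
    using Q_lower[OF dQ Q] by blast
  show ?thesis
  proof (intro exI[of _ "K / cq"] conjI allI impI)
    show "0 \<le> K / cq" using K0 cq by simp
    fix a b assume a: "a \<in> E_space \<beta> \<mu>" and b: "b \<in> E_space \<beta> \<mu>"
    have na: "0 \<le> normE \<beta> \<mu> a" and nb: "0 \<le> normE \<beta> \<mu> b" using normE_nonneg a b by auto
    have wb: "wt \<beta> \<mu> m * cmod (BQ R Q a b m) \<le> K / cq * normE \<beta> \<mu> a * normE \<beta> \<mu> b" for m
    proof -
      define z where "z = 1 + \<bar>m\<bar>"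
      have z: "z > 0" unfolding z_def by (simp add: add_pos_nonneg)
      have qp: "cmod (poly Q (\<i> * of_real m)) > 0" using Q[of m] by simp
      have "wt \<beta> \<mu> m * cmod (BQ R Q a b m) = wt \<beta> \<mu> m * cmod (cL R a b m) / cmod (poly Q (\<i> * of_real m))"
        unfolding BQ_def by (simp add: norm_divide)
      also have "\<dots> \<le> wt \<beta> \<mu> m * (K * normE \<beta> \<mu> a * normE \<beta> \<mu> b * exp (- \<beta> * \<bar>m\<bar>) * z powr (-(\<mu> - real (degree R))))
           / cmod (poly Q (\<i> * of_real m))"
        unfolding z_def using K[OF a b, of m] wt_pos[of \<beta> \<mu> m] qp
        by (intro divide_right_mono mult_left_mono) auto
      also have "wt \<beta> \<mu> m * (K * normE \<beta> \<mu> a * normE \<beta> \<mu> b * exp (- \<beta> * \<bar>m\<bar>) * z powr (-(\<mu> - real (degree R))))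
          = K * normE \<beta> \<mu> a * normE \<beta> \<mu> b * (z powr \<mu> * z powr (-(\<mu> - real (degree R)))) * (exp (\<beta> * \<bar>m\<bar>) * exp (- \<beta> * \<bar>m\<bar>))"
        unfolding wt_def z_def by (simp add: algebra_simps)
      also have "z powr \<mu> * z powr (-(\<mu> - real (degree R))) = z ^ degree R"
        using z by (simp add: powr_add[symmetric] powr_realpow)
      also have "exp (\<beta> * \<bar>m\<bar>) * exp (- \<beta> * \<bar>m\<bar>) = 1" by (simp add: exp_add[symmetric])
      also have "K * normE \<beta> \<mu> a * normE \<beta> \<mu> b * z ^ degree R * 1 / cmod (poly Q (\<i> * of_real m))
          \<le> K / cq * normE \<beta> \<mu> a * normE \<beta> \<mu> b"
      proof -
        have "z ^ degree R \<le> cmod (poly Q (\<i> * of_real m)) / cq" using cqb[of m] cq unfolding z_def by (simp add: field_simps)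
        then have "z ^ degree R / cmod (poly Q (\<i> * of_real m)) \<le> 1 / cq" using qp by (simp add: field_simps)
        then have "K * normE \<beta> \<mu> a * normE \<beta> \<mu> b * (z ^ degree R / cmod (poly Q (\<i> * of_real m)))
           \<le> K * normE \<beta> \<mu> a * normE \<beta> \<mu> b * (1 / cq)"
          by (intro mult_left_mono) (simp_all add: K0 na nb)
        then show ?thesis by simp
      qed
      finally show ?thesis .
    qed
    have cont: "continuous_on UNIV (BQ R Q a b)"
      unfolding BQ_def using cL_cont[OF a b \<beta> \<mu>] Q by (intro continuous_intros) auto
    show "BQ R Q a b \<in> E_space \<beta> \<mu>" by (rule E_intro[OF cont wb])
    show "normE \<beta> \<mu> (BQ R Q a b) \<le> K / cq * normE \<beta> \<mu> a * normE \<beta> \<mu> b" by (rule normE_le[OF wb])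
  qed
qed

lemma holo_E_BQ:
  assumes \<beta>: "\<beta> \<ge> 0" and \<mu>: "\<mu> > real (degree R) + 1" and dQ: "degree R \<le> degree Q"
    and Q: "\<And>m::real. poly Q (\<i> * complex_of_real m) \<noteq> 0"
    and f: "holo_E \<beta> \<mu> S f" and g: "holo_E \<beta> \<mu> S g" and S: "open S"
  shows "holo_E \<beta> \<mu> S (\<lambda>\<epsilon>. BQ R Q (f \<epsilon>) (g \<epsilon>))"
proof -
  obtain K where K0: "K \<ge> 0" and K: "\<And>a b. a \<in> E_space \<beta> \<mu> \<Longrightarrow> b \<in> E_space \<beta> \<mu> \<Longrightarrow>
      BQ R Q a b \<in> E_space \<beta> \<mu> \<and> normE \<beta> \<mu> (BQ R Q a b) \<le> K * normE \<beta> \<mu> a * normE \<beta> \<mu> b"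
    using BQ_props[OF \<beta> \<mu> dQ Q] by blast
  interpret bilinE \<beta> \<mu> K "BQ R Q"
  proof
    show "\<And>a b. a \<in> E_space \<beta> \<mu> \<Longrightarrow> b \<in> E_space \<beta> \<mu> \<Longrightarrow> BQ R Q a b \<in> E_space \<beta> \<mu>" using K by blast
    show "\<And>a b. a \<in> E_space \<beta> \<mu> \<Longrightarrow> b \<in> E_space \<beta> \<mu> \<Longrightarrow> normE \<beta> \<mu> (BQ R Q a b) \<le> K * normE \<beta> \<mu> a * normE \<beta> \<mu> b" using K by blast
    show "BQ R Q (\<lambda>m. x * a1 m + y * a2 m) b = (\<lambda>m. x * BQ R Q a1 b m + y * BQ R Q a2 b m)"
      if "a1 \<in> E_space \<beta> \<mu>" "a2 \<in> E_space \<beta> \<mu>" "b \<in> E_space \<beta> \<mu>" for a1 a2 b x y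
      unfolding BQ_def using cL_lin1[OF that \<beta> \<mu>] by (simp add: add_divide_distrib)
    show "BQ R Q a (\<lambda>m. x * b1 m + y * b2 m) = (\<lambda>m. x * BQ R Q a b1 m + y * BQ R Q a b2 m)"
      if "a \<in> E_space \<beta> \<mu>" "b1 \<in> E_space \<beta> \<mu>" "b2 \<in> E_space \<beta> \<mu>" for a b1 b2 x y
      unfolding BQ_def using cL_lin2[OF that \<beta> \<mu>] by (simp add: add_divide_distrib)
  qed
  show ?thesis by (rule holo_E_bilin[OF f g S K0])
qed


primrec iterW :: "((nat \<Rightarrow> 'a) \<Rightarrow> nat \<Rightarrow> 'a) \<Rightarrow> 'a \<Rightarrow> nat \<Rightarrow> nat \<Rightarrow> 'a" where
  "iterW \<Phi> z 0 = (\<lambda>_. z)"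
| "iterW \<Phi> z (Suc N) = (iterW \<Phi> z N)(N := \<Phi> (iterW \<Phi> z N) N)"

definition fixU :: "((nat \<Rightarrow> 'a) \<Rightarrow> nat \<Rightarrow> 'a) \<Rightarrow> 'a \<Rightarrow> nat \<Rightarrow> 'a" where
  "fixU \<Phi> z n = iterW \<Phi> z (Suc n) n"

lemma iterW_stable: "k < N \<Longrightarrow> N \<le> M \<Longrightarrow> iterW \<Phi> z M k = iterW \<Phi> z N k"
proof (induction M)
  case 0
  then show ?case by simp
next
  case (Suc M)
  show ?case
  proof (cases "N = Suc M")
    case True then show ?thesis by simp
  next
    case False
    then have "N \<le> M" using Suc.prems by simp
    then show ?thesis using Suc by simp
  qed
qed

lemma fixU_eq:
  assumes loc: "\<And>A B n. (\<And>k. k < n \<Longrightarrow> A k = B k) \<Longrightarrow> \<Phi> A n = \<Phi> B n"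
  shows "fixU \<Phi> z n = \<Phi> (fixU \<Phi> z) n"
proof -
  have "fixU \<Phi> z n = \<Phi> (iterW \<Phi> z n) n" unfolding fixU_def by simp
  also have "\<dots> = \<Phi> (fixU \<Phi> z) n"
  proof (rule loc)
    fix k assume "k < n"
    then show "iterW \<Phi> z n k = fixU \<Phi> z k" unfolding fixU_def by (intro iterW_stable) auto
  qed
  finally show ?thesis .
qed

lemma fs_conv_eq:
  assumes Cs: "\<And>j. j \<le> N \<Longrightarrow> Cs j \<in> E_space \<beta> \<mu>" and X: "\<And>j. j \<le> N \<Longrightarrow> X j \<in> E_space \<beta> \<mu>"
    and \<beta>: "\<beta> \<ge> 0" and \<mu>: "\<mu> > real (degree R) + 1"
  shows "fs_conv Cs R X N m = complex_of_real (1 / sqrt (2 * pi)) * (\<Sum>j\<le>N. cL R (Cs j) (X (N - j)) m)"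
proof -
  have ii: "integrable lebesgue (cint R (Cs j) (X (N - j)) m)" if "j \<in> {..N}" for j
    using that by (intro cint_int[OF Cs X \<beta> \<mu>]) auto
  have "integral UNIV (\<lambda>m1. \<Sum>j\<le>N. Cs j (m - m1) * poly R (\<i> * complex_of_real m1) * X (N - j) m1)
      = integral UNIV (\<lambda>m1. \<Sum>j\<le>N. cint R (Cs j) (X (N - j)) m m1)"
    unfolding cint_def by simp
  also have "\<dots> = (\<Sum>j\<le>N. integral UNIV (cint R (Cs j) (X (N - j)) m))"
    by (rule integral_sum) (use ii integrable_on_lebesgue in auto)
  also have "\<dots> = (\<Sum>j\<le>N. cL R (Cs j) (X (N - j)) m)"
  proof (rule sum.cong[OF refl])
    fix j assume "j \<in> {..N}"
    then show "integral UNIV (cint R (Cs j) (X (N - j)) m) = cL R (Cs j) (X (N - j)) m"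
      unfolding cL_def using has_integral_integral_lebesgue[OF ii] by (simp add: integral_unique)
  qed
  finally show ?thesis unfolding fs_conv_def by simp
qed

lemma ratio_bound:
  assumes "degree P \<le> degree Q" "\<And>m::real. poly Q (\<i> * complex_of_real m) \<noteq> 0"
  shows "\<exists>K. \<forall>m::real. cmod (poly P (\<i> * complex_of_real m) / poly Q (\<i> * complex_of_real m)) \<le> K"
proof -
  obtain K where K: "\<And>m::real. cmod (poly P (\<i> * of_real m)) \<le> K * cmod (poly Q (\<i> * of_real m))"
    using poly_ratio[OF assms] by blast
  show ?thesis
  proof (intro exI allI)
    fix m :: real
    have "cmod (poly Q (\<i> * of_real m)) > 0" using assms(2)[of m] by simp
    then show "cmod (poly P (\<i> * complex_of_real m) / poly Q (\<i> * complex_of_real m)) \<le> K"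
      using K[of m] by (simp add: norm_divide field_simps)
  qed
qed

lemma piece_PQ:
  assumes dP: "degree P \<le> degree Q" and Q: "\<And>m::real. poly Q (\<i> * complex_of_real m) \<noteq> 0"
    and S: "open S" and U: "d \<le> n \<Longrightarrow> holo_E \<beta> \<mu> S (\<lambda>\<epsilon> m. U (n - d) m \<epsilon>)"
  shows "holo_E \<beta> \<mu> S (\<lambda>\<epsilon> m. fs_shift d (fs_polymul P (fs_dil c (\<lambda>n m. U n m \<epsilon>))) n m
           / (poly Q (\<i> * complex_of_real m) * complex_of_real (q ^ n)))"
proof (cases "d \<le> n")
  case True
  define \<phi> where "\<phi> = (\<lambda>m::real. poly P (\<i> * complex_of_real m) / poly Q (\<i> * complex_of_real m) * (complex_of_real (c ^ (n - d)) / complex_of_real (q ^ n)))"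
  obtain K where K: "\<And>m::real. cmod (poly P (\<i> * complex_of_real m) / poly Q (\<i> * complex_of_real m)) \<le> K"
    using ratio_bound[OF dP Q] by blast
  have cont: "continuous_on UNIV \<phi>" unfolding \<phi>_def using Q by (intro continuous_intros) auto
  have bnd: "cmod (\<phi> m) \<le> K * cmod (complex_of_real (c ^ (n - d)) / complex_of_real (q ^ n))" for m
    unfolding \<phi>_def norm_mult by (rule mult_right_mono[OF K]) simp
  have "holo_E \<beta> \<mu> S (\<lambda>\<epsilon> m. \<phi> m * U (n - d) m \<epsilon>)"
    by (rule holo_E_mult[OF U[OF True] S cont bnd])
  then show ?thesis
    by (rule holo_E_cong[OF _ S]) (simp add: True \<phi>_def fs_shift_def fs_polymul_def fs_dil_def divide_inverse inverse_mult_distrib mult_ac)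
next
  case False
  then show ?thesis
    using holo_E_zero by (simp add: fs_shift_def)
qed

lemma piece_F:
  assumes Q: "\<And>m::real. poly Q (\<i> * complex_of_real m) \<noteq> 0" and q: "q \<noteq> 0"
    and S: "open S" and F: "holo_E \<beta> \<mu> S (\<lambda>\<epsilon> m. F n m \<epsilon>)"
  shows "holo_E \<beta> \<mu> S (\<lambda>\<epsilon> m. fs_dil q (\<lambda>n m. F n m \<epsilon>) n m
           / (poly Q (\<i> * complex_of_real m) * complex_of_real (q ^ n)))"
proof -
  define \<phi> where "\<phi> = (\<lambda>m::real. poly 1 (\<i> * complex_of_real m) / poly Q (\<i> * complex_of_real m))"
  obtain K where K: "\<And>m::real. cmod (poly 1 (\<i> * complex_of_real m) / poly Q (\<i> * complex_of_real m)) \<le> K"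
    using ratio_bound[of 1 Q] Q by auto
  have cont: "continuous_on UNIV \<phi>" unfolding \<phi>_def using Q by (intro continuous_intros) auto
  have "holo_E \<beta> \<mu> S (\<lambda>\<epsilon> m. \<phi> m * F n m \<epsilon>)"
    by (rule holo_E_mult[OF F S cont]) (use K in \<open>simp add: \<phi>_def\<close>)
  then show ?thesis
    by (rule holo_E_cong[OF _ S]) (use q in \<open>simp add: \<phi>_def fs_dil_def\<close>)
qed

lemma piece_conv:
  assumes \<beta>: "\<beta> \<ge> 0" and \<mu>: "\<mu> > real (degree R) + 1" and dQ: "degree R \<le> degree Q"
    and Q: "\<And>m::real. poly Q (\<i> * complex_of_real m) \<noteq> 0" and S: "open S"
    and C: "\<And>j. j \<le> p1 \<Longrightarrow> holo_E \<beta> \<mu> S (\<lambda>\<epsilon> m. C j m \<epsilon>)"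
    and U: "\<And>k. dl \<le> n \<Longrightarrow> k \<le> n - dl \<Longrightarrow> holo_E \<beta> \<mu> S (\<lambda>\<epsilon> m. U k m \<epsilon>)"
  shows "holo_E \<beta> \<mu> S (\<lambda>\<epsilon> m. \<epsilon> ^ e * fs_shift dl (fs_dil c (fs_conv (\<lambda>j m. if j \<le> p1 then C j m \<epsilon> else 0) R (\<lambda>n m. U n m \<epsilon>))) n m
           / (poly Q (\<i> * complex_of_real m) * complex_of_real (q ^ n)))"
proof (cases "dl \<le> n")
  case True
  define N where "N = n - dl"
  define C' where "C' = (\<lambda>j \<epsilon> m. if j \<le> p1 then C j m \<epsilon> else 0)"
  have C': "holo_E \<beta> \<mu> S (C' j)" for j
  proof (cases "j \<le> p1")
    case True then show ?thesis using C[OF True] unfolding C'_def by simp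
  next
    case False then show ?thesis unfolding C'_def using holo_E_zero by simp
  qed
  have UN: "k \<le> N \<Longrightarrow> holo_E \<beta> \<mu> S (\<lambda>\<epsilon> m. U k m \<epsilon>)" for k using U[OF True] unfolding N_def by simp
  define K where "K = complex_of_real (c ^ N) * complex_of_real (1 / sqrt (2 * pi)) / complex_of_real (q ^ n)"
  have h1: "holo_E \<beta> \<mu> S (\<lambda>\<epsilon> m. \<Sum>j\<in>{..N}. BQ R Q (C' j \<epsilon>) ((\<lambda>\<epsilon> m. U (N - j) m \<epsilon>) \<epsilon>) m)"
    by (rule holo_E_sum[OF _ _ S]) (auto intro!: holo_E_BQ[OF \<beta> \<mu> dQ Q C' UN S])
  have h2: "holo_E \<beta> \<mu> S (\<lambda>\<epsilon> m. \<epsilon> ^ e * (K * (\<Sum>j\<in>{..N}. BQ R Q (C' j \<epsilon>) ((\<lambda>\<epsilon> m. U (N - j) m \<epsilon>) \<epsilon>) m)))"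
    by (rule holo_E_scal[OF holo_E_cmult[OF h1 S] S]) (rule derivative_eq_intros | simp)+
  show ?thesis
  proof (rule holo_E_cong[OF h2 S])
    fix \<epsilon> m assume e: "\<epsilon> \<in> S"
    have CE: "C' j \<epsilon> \<in> E_space \<beta> \<mu>" for j by (rule holo_ED(1)[OF C' e])
    have UE: "j \<le> N \<Longrightarrow> (\<lambda>m. U j m \<epsilon>) \<in> E_space \<beta> \<mu>" for j by (rule holo_ED(1)[OF UN e])
    have fc: "fs_conv (\<lambda>j m. if j \<le> p1 then C j m \<epsilon> else 0) R (\<lambda>n m. U n m \<epsilon>) N m
        = complex_of_real (1 / sqrt (2 * pi)) * (\<Sum>j\<le>N. cL R (C' j \<epsilon>) (\<lambda>m. U (N - j) m \<epsilon>) m)"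
      using fs_conv_eq[of N "\<lambda>j m. if j \<le> p1 then C j m \<epsilon> else 0" \<beta> \<mu> "\<lambda>n m. U n m \<epsilon>" R m] CE UE \<beta> \<mu>
      unfolding C'_def by simp
    have cl: "cL R (C' j \<epsilon>) (\<lambda>m. U (N - j) m \<epsilon>) m = BQ R Q (C' j \<epsilon>) (\<lambda>m. U (N - j) m \<epsilon>) m * poly Q (\<i> * complex_of_real m)" for j
      using Q[of m] unfolding BQ_def by simp
    have "\<epsilon> ^ e * fs_shift dl (fs_dil c (fs_conv (\<lambda>j m. if j \<le> p1 then C j m \<epsilon> else 0) R (\<lambda>n m. U n m \<epsilon>))) n m
           / (poly Q (\<i> * complex_of_real m) * complex_of_real (q ^ n))
        = \<epsilon> ^ e * (complex_of_real (c ^ N) * (complex_of_real (1 / sqrt (2 * pi)) * ((\<Sum>j\<le>N. BQ R Q (C' j \<epsilon>) (\<lambda>m. U (N - j) m \<epsilon>) m) * poly Q (\<i> * complex_of_real m))))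
           / (poly Q (\<i> * complex_of_real m) * complex_of_real (q ^ n))"
      unfolding fs_shift_def fs_dil_def using True by (simp add: N_def[symmetric] fc cl sum_distrib_right)
    also have "\<dots> = \<epsilon> ^ e * (K * (\<Sum>j\<in>{..N}. BQ R Q (C' j \<epsilon>) ((\<lambda>\<epsilon> m. U (N - j) m \<epsilon>) \<epsilon>) m))"
      unfolding K_def using Q[of m] by (simp add: field_simps)
    finally show "\<epsilon> ^ e * (K * (\<Sum>j\<in>{..N}. BQ R Q (C' j \<epsilon>) ((\<lambda>\<epsilon> m. U (N - j) m \<epsilon>) \<epsilon>) m)) =
         \<epsilon> ^ e * fs_shift dl (fs_dil c (fs_conv (\<lambda>j m. if j \<le> p1 then C j m \<epsilon> else 0) R (\<lambda>n m. U n m \<epsilon>))) n m /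
         (poly Q (\<i> * complex_of_real m) * complex_of_real (q ^ n))" by simp
  qed
next
  case False
  then show ?thesis
    using holo_E_zero by (simp add: fs_shift_def)
qed


lemma loc_shift:
  assumes "\<And>k. k < n \<Longrightarrow> X k = Y k" "1 \<le> d"
  shows "fs_shift d X n m = fs_shift d Y n m"
proof (cases "d \<le> n")
  case True
  then have "n - d < n" using assms(2) by simp
  then show ?thesis using assms(1) by (simp add: fs_shift_def)
qed (simp add: fs_shift_def)

lemma loc_conv:
  assumes "\<And>k. k < n \<Longrightarrow> X k = Y k" "N < n"
  shows "fs_conv Cs R X N = fs_conv Cs R Y N"
proof -
  have "X (N - j) = Y (N - j)" for j using assms by simp
  then show ?thesis unfolding fs_conv_def by simp
qed

theorem proposition9:
  fixes q :: real and k1 k2 :: nat and \<kappa> :: real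
    and D D1 D2 dD1 dD2 :: nat and d \<delta> \<Delta> :: "nat \<Rightarrow> nat"
    and Q RD1 RD2 :: "complex poly" and R :: "nat \<Rightarrow> complex poly"
    and \<beta> \<mu> \<epsilon>0 CF T0 :: real
    and F :: "nat \<Rightarrow> real \<Rightarrow> complex \<Rightarrow> complex"
    and C :: "nat \<Rightarrow> nat \<Rightarrow> real \<Rightarrow> complex \<Rightarrow> complex" and p1 :: nat
  assumes hq: "q > 1"
    and hk: "1 \<le> k1" "k1 < k2"
    and h\<kappa>: "1 / \<kappa> = 1 / real k1 - 1 / real k2"
    and hD: "D \<ge> 3" "D1 \<ge> 3" "D2 \<ge> 3"
    and hdD: "dD1 \<ge> 1" "dD2 \<ge> 1"
    and hd: "\<And>l. 1 \<le> l \<Longrightarrow> l \<le> D - 1 \<Longrightarrow> d l \<ge> 1 \<and> \<delta> l \<ge> 1"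
    and h\<delta>1: "\<delta> 1 = 1"
    and h\<delta>mono: "\<And>l. 1 \<le> l \<Longrightarrow> l \<le> D - 2 \<Longrightarrow> \<delta> l < \<delta> (l + 1)"
    and h\<Delta>: "\<And>l. 1 \<le> l \<Longrightarrow> l \<le> D - 1 \<Longrightarrow> \<Delta> l \<ge> d l"
    and hc1: "\<And>l. 1 \<le> l \<Longrightarrow> l \<le> D - 1 \<Longrightarrow> real (d l) / real k2 + 1 \<ge> real (\<delta> l)"
    and hc2: "\<And>l. 1 \<le> l \<Longrightarrow> l \<le> D - 1 \<Longrightarrow>
                (real dD1 - 1) / \<kappa> - real (d l) / real k2 \<ge> real (\<delta> l) - 1"
    and hc3: "\<And>l. 1 \<le> l \<Longrightarrow> l \<le> D - 1 \<Longrightarrow> (real dD2 - 1) / real k2 \<ge> real (\<delta> l) - 1"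
    and hk12: "k1 * dD2 > k2 * dD1"
    and hdeg: "degree RD1 = degree RD2"
    and hdegQ: "degree Q \<ge> degree RD1"
    and hdegR: "\<And>l. 1 \<le> l \<Longrightarrow> l \<le> D - 1 \<Longrightarrow> degree RD1 \<ge> degree (R l)"
    and hQ: "\<And>m::real. poly Q (\<i> * complex_of_real m) \<noteq> 0"
    and hRD1: "\<And>m::real. poly RD1 (\<i> * complex_of_real m) \<noteq> 0"
    and hRD2: "\<And>m::real. poly RD2 (\<i> * complex_of_real m) \<noteq> 0"
    and h\<beta>: "\<beta> > 0"
    and h\<mu>: "\<mu> > real (degree RD1) + 1"
    and h\<epsilon>0: "\<epsilon>0 > 0"
    and hFhol: "\<And>n. holo_E \<beta> \<mu> (ball 0 \<epsilon>0) (\<lambda>\<epsilon> m. F n m \<epsilon>)"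
    and hCF: "CF > 0" "T0 > 0"
    and hFbd: "\<And>n \<epsilon>. \<epsilon> \<in> ball 0 \<epsilon>0 \<Longrightarrow>
       normE \<beta> \<mu> (\<lambda>m. F n m \<epsilon>) \<le> CF * inverse (T0 ^ n) * (q powr (1 / real k1)) ^ (n * (n - 1) div 2)"
    and hChol: "\<And>l j. 1 \<le> l \<Longrightarrow> l \<le> D - 1 \<Longrightarrow> j \<le> p1 \<Longrightarrow>
       holo_E \<beta> \<mu> (ball 0 \<epsilon>0) (\<lambda>\<epsilon> m. C l j m \<epsilon>)"
  shows "\<exists>U. solves_eq q k1 k2 D dD1 dD2 Q RD1 RD2 R d \<delta> \<Delta> C p1 F \<epsilon>0 U
           \<and> (\<forall>n. holo_E \<beta> \<mu> (ball 0 \<epsilon>0) (\<lambda>\<epsilon> m. U n m \<epsilon>))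
           \<and> (\<forall>V. solves_eq q k1 k2 D dD1 dD2 Q RD1 RD2 R d \<delta> \<Delta> C p1 F \<epsilon>0 V
                  \<and> (\<forall>n. \<forall>\<epsilon>\<in>ball 0 \<epsilon>0. (\<lambda>m. V n m \<epsilon>) \<in> E_space \<beta> \<mu>)
                  \<longrightarrow> (\<forall>n m. \<forall>\<epsilon>\<in>ball 0 \<epsilon>0. V n m \<epsilon> = U n m \<epsilon>))"
proof -
  define RHS where "RHS = (\<lambda>(U::nat \<Rightarrow> real \<Rightarrow> complex \<Rightarrow> complex) \<epsilon> n m.
        fs_shift dD1 (fs_polymul RD1 (fs_dil (q powr (real dD1 / real k1 + 1)) (\<lambda>n m. U n m \<epsilon>))) n m
      + fs_shift dD2 (fs_polymul RD2 (fs_dil (q powr (real dD2 / real k2 + 1)) (\<lambda>n m. U n m \<epsilon>))) n m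
      + (\<Sum>l\<in>{1..D-1}. \<epsilon> ^ (\<Delta> l - d l) *
           fs_shift (d l) (fs_dil (q powr real (\<delta> l))
             (fs_conv (\<lambda>j m. if j \<le> p1 then C l j m \<epsilon> else 0) (R l) (\<lambda>n m. U n m \<epsilon>))) n m)
      + fs_dil q (\<lambda>n m. F n m \<epsilon>) n m)"
  have solves_iff: "solves_eq q k1 k2 D dD1 dD2 Q RD1 RD2 R d \<delta> \<Delta> C p1 F \<epsilon>0 V \<longleftrightarrow>
      (\<forall>\<epsilon>\<in>ball 0 \<epsilon>0. \<forall>n m. fs_polymul Q (fs_dil q (\<lambda>n m. V n m \<epsilon>)) n m = RHS V \<epsilon> n m)" for V
    unfolding solves_eq_def RHS_def by (rule refl)
  have loc_RHS: "RHS A \<epsilon> n m = RHS B \<epsilon> n m"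
    if H: "\<And>k. k < n \<Longrightarrow> (\<lambda>m. A k m \<epsilon>) = (\<lambda>m. B k m \<epsilon>)" for A B \<epsilon> n m
  proof -
    have H': "A k m' \<epsilon> = B k m' \<epsilon>" if "k < n" for k m' using H[OF that] by meson
    have t1: "fs_shift dD1 (fs_polymul RD1 (fs_dil c (\<lambda>n m. A n m \<epsilon>))) n m = fs_shift dD1 (fs_polymul RD1 (fs_dil c (\<lambda>n m. B n m \<epsilon>))) n m" for c
      by (rule loc_shift[OF _ hdD(1)]) (simp add: fs_polymul_def fs_dil_def H' fun_eq_iff)
    have t2: "fs_shift dD2 (fs_polymul RD2 (fs_dil c (\<lambda>n m. A n m \<epsilon>))) n m = fs_shift dD2 (fs_polymul RD2 (fs_dil c (\<lambda>n m. B n m \<epsilon>))) n m" for c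
      by (rule loc_shift[OF _ hdD(2)]) (simp add: fs_polymul_def fs_dil_def H' fun_eq_iff)
    have t3: "fs_shift (d l) (fs_dil c (fs_conv Cs (R l) (\<lambda>n m. A n m \<epsilon>))) n m = fs_shift (d l) (fs_dil c (fs_conv Cs (R l) (\<lambda>n m. B n m \<epsilon>))) n m"
      if l: "l \<in> {1..D-1}" for l c Cs
    proof (rule loc_shift)
      show "1 \<le> d l" using hd[of l] l by auto
      fix k assume k: "k < n"
      have "fs_conv Cs (R l) (\<lambda>n m. A n m \<epsilon>) k = fs_conv Cs (R l) (\<lambda>n m. B n m \<epsilon>) k"
        by (rule loc_conv[OF _ k]) (simp add: H)
      then show "fs_dil c (fs_conv Cs (R l) (\<lambda>n m. A n m \<epsilon>)) k = fs_dil c (fs_conv Cs (R l) (\<lambda>n m. B n m \<epsilon>)) k"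
        by (simp add: fs_dil_def fun_eq_iff)
    qed
    have t4: "(\<Sum>l\<in>{1..D-1}. \<epsilon> ^ (\<Delta> l - d l) *
           fs_shift (d l) (fs_dil (q powr real (\<delta> l))
             (fs_conv (\<lambda>j m. if j \<le> p1 then C l j m \<epsilon> else 0) (R l) (\<lambda>n m. A n m \<epsilon>))) n m)
      = (\<Sum>l\<in>{1..D-1}. \<epsilon> ^ (\<Delta> l - d l) *
           fs_shift (d l) (fs_dil (q powr real (\<delta> l))
             (fs_conv (\<lambda>j m. if j \<le> p1 then C l j m \<epsilon> else 0) (R l) (\<lambda>n m. B n m \<epsilon>))) n m)"
      by (rule sum.cong[OF refl]) (simp only: t3)
    show ?thesis unfolding RHS_def using t1 t2 t4 by simp
  qed
  define \<Phi> where "\<Phi> = (\<lambda>(U::nat \<Rightarrow> real \<Rightarrow> complex \<Rightarrow> complex) n. \<lambda>m \<epsilon>. RHS U \<epsilon> n m / (poly Q (\<i> * complex_of_real m) * complex_of_real (q ^ n)))"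
  define U where "U = fixU \<Phi> (\<lambda>m \<epsilon>. 0)"
  have Ueq: "U n m \<epsilon> = RHS U \<epsilon> n m / (poly Q (\<i> * complex_of_real m) * complex_of_real (q ^ n))" for n m \<epsilon>
  proof -
    have "U n = \<Phi> U n" unfolding U_def
    proof (rule fixU_eq)
      fix A B :: "nat \<Rightarrow> real \<Rightarrow> complex \<Rightarrow> complex" and n assume "\<And>k. k < n \<Longrightarrow> A k = B k"
      then show "\<Phi> A n = \<Phi> B n" unfolding \<Phi>_def using loc_RHS by (simp add: fun_eq_iff)
    qed
    then show ?thesis unfolding \<Phi>_def by (simp add: fun_eq_iff)
  qed
  have qn: "complex_of_real (q ^ n) \<noteq> 0" for n using hq by simp
  have Qn: "poly Q (\<i> * complex_of_real m) \<noteq> 0" for m by (rule hQ)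
  have sol: "solves_eq q k1 k2 D dD1 dD2 Q RD1 RD2 R d \<delta> \<Delta> C p1 F \<epsilon>0 U"
    unfolding solves_iff
  proof (intro ballI allI)
    fix \<epsilon> n m
    show "fs_polymul Q (fs_dil q (\<lambda>n m. U n m \<epsilon>)) n m = RHS U \<epsilon> n m"
      unfolding fs_polymul_def fs_dil_def Ueq[of n m \<epsilon>] using qn[of n] Qn[of m] by simp
  qed
  have Sop: "open (ball (0::complex) \<epsilon>0)" by simp
  have \<beta>0: "\<beta> \<ge> 0" using h\<beta> by simp
  have holo: "holo_E \<beta> \<mu> (ball 0 \<epsilon>0) (\<lambda>\<epsilon> m. U n m \<epsilon>)" for n
  proof (induction n rule: less_induct)
    case (less n)
    let ?D = "\<lambda>m. poly Q (\<i> * complex_of_real m) * complex_of_real (q ^ n)"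
    have p1: "holo_E \<beta> \<mu> (ball 0 \<epsilon>0) (\<lambda>\<epsilon> m. fs_shift dD1 (fs_polymul RD1 (fs_dil (q powr (real dD1 / real k1 + 1)) (\<lambda>n m. U n m \<epsilon>))) n m / ?D m)"
      by (rule piece_PQ[OF hdegQ hQ Sop]) (rule less, use hdD in auto)
    have p2: "holo_E \<beta> \<mu> (ball 0 \<epsilon>0) (\<lambda>\<epsilon> m. fs_shift dD2 (fs_polymul RD2 (fs_dil (q powr (real dD2 / real k2 + 1)) (\<lambda>n m. U n m \<epsilon>))) n m / ?D m)"
      by (rule piece_PQ[OF _ hQ Sop]) (use hdegQ hdeg in simp, rule less, use hdD in auto)
    have p3: "holo_E \<beta> \<mu> (ball 0 \<epsilon>0) (\<lambda>\<epsilon> m. \<Sum>l\<in>{1..D-1}. \<epsilon> ^ (\<Delta> l - d l) *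
           fs_shift (d l) (fs_dil (q powr real (\<delta> l))
             (fs_conv (\<lambda>j m. if j \<le> p1 then C l j m \<epsilon> else 0) (R l) (\<lambda>n m. U n m \<epsilon>))) n m / ?D m)"
    proof (rule holo_E_sum[OF _ _ Sop])
      fix l assume l: "l \<in> {1..D-1}"
      then have l1: "1 \<le> l" "l \<le> D - 1" by auto
      show "holo_E \<beta> \<mu> (ball 0 \<epsilon>0) (\<lambda>\<epsilon> m. \<epsilon> ^ (\<Delta> l - d l) *
           fs_shift (d l) (fs_dil (q powr real (\<delta> l))
             (fs_conv (\<lambda>j m. if j \<le> p1 then C l j m \<epsilon> else 0) (R l) (\<lambda>n m. U n m \<epsilon>))) n m / ?D m)"
      proof (rule piece_conv[OF \<beta>0 _ _ hQ Sop])
        show "\<mu> > real (degree (R l)) + 1" using hdegR[OF l1] h\<mu> by linarith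
        show "degree (R l) \<le> degree Q" using hdegR[OF l1] hdegQ by linarith
        show "\<And>j. j \<le> p1 \<Longrightarrow> holo_E \<beta> \<mu> (ball 0 \<epsilon>0) (\<lambda>\<epsilon> m. C l j m \<epsilon>)" by (rule hChol[OF l1])
        fix k assume "d l \<le> n" "k \<le> n - d l"
        then have "k < n" using hd[OF l1] by linarith
        then show "holo_E \<beta> \<mu> (ball 0 \<epsilon>0) (\<lambda>\<epsilon> m. U k m \<epsilon>)" by (rule less)
      qed
    qed simp
    have p4: "holo_E \<beta> \<mu> (ball 0 \<epsilon>0) (\<lambda>\<epsilon> m. fs_dil q (\<lambda>n m. F n m \<epsilon>) n m / ?D m)"
      by (rule piece_F[OF hQ _ Sop hFhol]) (use hq in simp)
    have "holo_E \<beta> \<mu> (ball 0 \<epsilon>0) (\<lambda>\<epsilon> m.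
        fs_shift dD1 (fs_polymul RD1 (fs_dil (q powr (real dD1 / real k1 + 1)) (\<lambda>n m. U n m \<epsilon>))) n m / ?D m
      + fs_shift dD2 (fs_polymul RD2 (fs_dil (q powr (real dD2 / real k2 + 1)) (\<lambda>n m. U n m \<epsilon>))) n m / ?D m
      + (\<Sum>l\<in>{1..D-1}. \<epsilon> ^ (\<Delta> l - d l) *
           fs_shift (d l) (fs_dil (q powr real (\<delta> l))
             (fs_conv (\<lambda>j m. if j \<le> p1 then C l j m \<epsilon> else 0) (R l) (\<lambda>n m. U n m \<epsilon>))) n m / ?D m)
      + fs_dil q (\<lambda>n m. F n m \<epsilon>) n m / ?D m)"
      by (intro holo_E_add p1 p2 p3 p4 Sop)
    then show ?case
      by (rule holo_E_cong[OF _ Sop]) (simp add: Ueq[where n=n] RHS_def add_divide_distrib sum_divide_distrib)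
  qed
  have uniq: "V n m \<epsilon> = U n m \<epsilon>"
    if V: "solves_eq q k1 k2 D dD1 dD2 Q RD1 RD2 R d \<delta> \<Delta> C p1 F \<epsilon>0 V" and e: "\<epsilon> \<in> ball 0 \<epsilon>0" for V n m \<epsilon>
  proof (induction n arbitrary: m rule: less_induct)
    case (less n)
    have "fs_polymul Q (fs_dil q (\<lambda>n m. V n m \<epsilon>)) n m = RHS V \<epsilon> n m"
      using V e unfolding solves_iff by blast
    also have "RHS V \<epsilon> n m = RHS U \<epsilon> n m"
      by (rule loc_RHS) (simp add: less fun_eq_iff)
    finally have "poly Q (\<i> * complex_of_real m) * (complex_of_real (q ^ n) * V n m \<epsilon>) = RHS U \<epsilon> n m"
      by (simp add: fs_polymul_def fs_dil_def)
    then show ?case unfolding Ueq[of n m \<epsilon>] using qn[of n] Qn[of m] by (simp add: field_simps)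
  qed
  show ?thesis
    using sol holo uniq by blast
qed

end
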